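(* Let $N_{123},N_1,N_2,N_3\ge1$ dyadic, $m\in\mathbb Z$, $\pm_{123},\pm_1,\pm_2,\pm_3\in\{+,-\}$, and $\varphi(n_1,n_2,n_3)=\pm_{123}\langle n_{123}\rangle\pm_1\langle n_1\rangle\pm_2\langle n_2\rangle\pm_3\langle n_3\rangle$. Then for all $0<\gamma<\beta$, $$\sup_{n_2\in\mathbb Z^3:\,|n_2|\sim N_2}\ \sum_{n_1,n_3\in\mathbb Z^3}\Big(\prod_{j=1,3}1\{|n_j|\sim N_j\}\Big)\langle n_{123}\rangle^{2(s_2-1)}\langle n_{12}\rangle^{-2\beta}\langle n_1\rangle^{-2}\langle n_3\rangle^{-2}1\{|\varphi-m|\le1\}\lesssim\max(N_1,N_2,N_3)^{2\delta_2}N_1^{-2\gamma}N_2^{2\gamma}.$$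
   Context: $\langle n\rangle=(1+|n|^2)^{1/2}$, $n_{12}=n_1+n_2$, $n_{123}=n_1+n_2+n_3$. $0<\beta<1/2$ is the fixed parameter of the interaction potential (standing assumption); $\delta_2>0$ is a small fixed parameter and $s_2=1/2+\delta_2$. "$|x|\sim N$" means $c^{-1}N\le|x|\le cN$ for a fixed absolute $c$ (and $|x|\le c$ when $N=1$). The implicit constant depends only on $\beta,\gamma,\delta_2$. *)

theory Defs
  imports Complex_Main
begin

type_synonym zvec = "int \<times> int \<times> int"

definition vadd :: "zvec \<Rightarrow> zvec \<Rightarrow> zvec" where
  "vadd x y = (fst x + fst y, fst (snd x) + fst (snd y), snd (snd x) + snd (snd y))"

definition znorm :: "zvec \<Rightarrow> real" where
  "znorm x = sqrt (real_of_int (fst x)^2 + real_of_int (fst (snd x))^2 + real_of_int (snd (snd x))^2)"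

definition jbr :: "zvec \<Rightarrow> real" where
  "jbr x = sqrt (1 + (znorm x)^2)"

definition sim :: "real \<Rightarrow> zvec \<Rightarrow> real \<Rightarrow> bool" where
  "sim c x N = (if N = 1 then znorm x \<le> c else N / c \<le> znorm x \<and> znorm x \<le> c * N)"

definition dyadic :: "real \<Rightarrow> bool" where
  "dyadic N = (\<exists>k::nat. N = 2 ^ k)"

text \<open>Phase function; signs are encoded as reals in {1,-1}.\<close>
definition phase :: "real \<Rightarrow> real \<Rightarrow> real \<Rightarrow> real \<Rightarrow> zvec \<Rightarrow> zvec \<Rightarrow> zvec \<Rightarrow> real" where
  "phase e123 e1 e2 e3 n1 n2 n3 =
     e123 * jbr (vadd (vadd n1 n2) n3) + e1 * jbr n1 + e2 * jbr n2 + e3 * jbr n3"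

end

theory Submission
  imports Defs "HOL-Analysis.Analysis"
begin

lemma sqrt_diff_eq:
  fixes x y :: real
  assumes "x \<ge> 0" "y \<ge> 0" "x + y > 0"
  shows "sqrt x - sqrt y = (x - y) / (sqrt x + sqrt y)"
proof -
  have pos: "sqrt x + sqrt y > 0" using assms
    by (metis add_nonneg_pos add_pos_nonneg order_le_less real_sqrt_ge_zero real_sqrt_gt_0_iff add_cancel_right_right)
  have "(sqrt x - sqrt y) * (sqrt x + sqrt y) = x - y"
    using assms by (simp add: algebra_simps)
  then show ?thesis using pos by (simp add: field_simps)
qed

lemma sqrt_le_of_sq:
  fixes x y :: real
  assumes "x \<le> y\<^sup>2" "y \<ge> 0"
  shows "sqrt x \<le> y"
proof -
  have "sqrt x \<le> sqrt (y\<^sup>2)" using assms(1) by (rule real_sqrt_le_mono)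
  then show ?thesis using assms(2) by simp
qed

lemma sqrt_le_1L:
  fixes t w L :: real
  assumes "w \<ge> 0" "t\<^sup>2 + w \<le> L\<^sup>2" "L \<ge> 0"
  shows "sqrt (1 + t\<^sup>2 + w) \<le> 1 + L"
proof -
  have "1 + t\<^sup>2 + w \<le> (1 + L)\<^sup>2" using assms by (simp add: power2_eq_square algebra_simps)
  then show ?thesis using assms
    by (intro sqrt_le_of_sq) auto
qed

lemma sqrt_le_1Ld:
  fixes t w L d :: real
  assumes "w \<ge> 0" "t\<^sup>2 + w \<le> L\<^sup>2" "L \<ge> 0" "d \<ge> 0"
  shows "sqrt (1 + (t + d)\<^sup>2 + w) \<le> 1 + L + d"
proof -
  have "t \<le> L" using assms
    by (metis abs_le_square_iff abs_of_nonneg add_increasing2 le_add_same_cancel1 abs_ge_self order_trans power2_abs)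
  then have "t * d \<le> L * d" using assms by (simp add: mult_right_mono)
  then have "1 + (t + d)\<^sup>2 + w \<le> (1 + L + d)\<^sup>2" using assms
    by (simp add: power2_eq_square algebra_simps)
  then show ?thesis using assms
    by (intro sqrt_le_of_sq) auto
qed

lemma vol_by_slices:
  fixes A :: "(real \<times> (real \<times> real)) set"
  assumes A: "A \<in> sets borel" and c: "c \<ge> 0" and ab: "a \<le> b"
    and sl: "\<And>t. emeasure lborel {q. (t, q) \<in> A} \<le> ennreal c * indicator {a..b} t"
  shows "emeasure lborel A \<le> ennreal (c * (b - a))"
proof -
  have "emeasure (lborel::(real \<times> (real \<times> real)) measure) A = emeasure (lborel \<Otimes>\<^sub>M lborel) A"
    by (simp add: lborel_prod)
  also have "\<dots> = (\<integral>\<^sup>+t. emeasure lborel (Pair t -` A) \<partial>lborel)"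
  proof (rule lborel.emeasure_pair_measure_alt)
    have "sets (lborel \<Otimes>\<^sub>M lborel) = sets (lborel :: (real \<times> (real \<times> real)) measure)"
      by (simp only: lborel_prod)
    then show "A \<in> sets (lborel \<Otimes>\<^sub>M (lborel :: (real \<times> real) measure))" using A by simp
  qed
  also have "\<dots> \<le> (\<integral>\<^sup>+t. ennreal c * indicator {a..b} t \<partial>lborel)"
    by (intro nn_integral_mono) (simp add: vimage_def sl)
  also have "\<dots> = ennreal c * emeasure lborel {a..b}"
    by (rule nn_integral_cmult_indicator) simp
  also have "\<dots> = ennreal (c * (b - a))"
    using ab c by (simp add: ennreal_mult)
  finally show ?thesis .
qed

lemma annulus_measure:
  fixes S :: "(real \<times> real) set" and W :: "real set"
  assumes S: "S \<subseteq> {q. (norm q)\<^sup>2 \<in> W}" and diam: "\<And>w w'. w \<in> W \<Longrightarrow> w' \<in> W \<Longrightarrow> w' - w \<le> D"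
    and D: "D \<ge> 0" and W0: "\<And>w. w \<in> W \<Longrightarrow> w \<ge> 0"
  shows "emeasure lborel S \<le> ennreal (2 * pi * D)"
proof (cases "W = {}")
  case True
  then have "S = {}" using S by auto
  then show ?thesis by simp
next
  case False
  then obtain w0 where w0: "w0 \<in> W" by auto
  define r1 where "r1 = sqrt (max 0 (w0 - D))"
  define r2 where "r2 = sqrt (w0 + D)"
  have r1: "r1 \<ge> 0" unfolding r1_def by simp
  have "w0 - w0 \<le> D" using diam[OF w0 w0] .
  have sub: "S \<subseteq> cball 0 r2 - ball 0 r1"
  proof
    fix q assume "q \<in> S"
    then have qW: "(norm q)\<^sup>2 \<in> W" using S by auto
    have up: "(norm q)\<^sup>2 \<le> w0 + D" using diam[OF w0 qW] by simp
    have lo: "w0 - D \<le> (norm q)\<^sup>2" using diam[OF qW w0] by simp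
    have "norm q \<le> r2" unfolding r2_def using up
      by (metis real_sqrt_abs real_sqrt_le_mono abs_norm_cancel)
    moreover have "r1 \<le> norm q" unfolding r1_def using lo
      by (metis max.bounded_iff norm_ge_zero real_sqrt_abs real_sqrt_le_mono abs_norm_cancel zero_le_power2)
    ultimately show "q \<in> cball 0 r2 - ball 0 r1" by (simp add: dist_norm)
  qed
  have r12: "r1 \<le> r2" unfolding r1_def r2_def using D W0[OF w0]
    by (intro real_sqrt_le_mono) auto
  have bsub: "ball (0::real\<times>real) r1 \<subseteq> cball 0 r2" using r12 by auto
  have "emeasure lborel S \<le> emeasure lborel (cball (0::real\<times>real) r2 - ball 0 r1)"
    using sub by (intro emeasure_mono) auto
  also have "\<dots> = emeasure lborel (cball (0::real\<times>real) r2) - emeasure lborel (ball (0::real\<times>real) r1)"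
    using bsub emeasure_lborel_ball_finite[of "0::real\<times>real" r1]
    by (intro emeasure_Diff) (auto simp: emeasure_lborel_cball_finite top.not_eq_extremum)
  also have "\<dots> = ennreal (pi * r2\<^sup>2) - ennreal (pi * r1\<^sup>2)"
  proof -
    have r2: "r2 \<ge> 0" unfolding r2_def using W0[OF w0] D by simp
    show ?thesis
      using emeasure_cball[OF r2, of "0::real\<times>real"] emeasure_ball[OF r1, of "0::real\<times>real"]
      by (simp add: unit_ball_vol_2 mult.commute power2_eq_square)
  qed
  also have "\<dots> = ennreal (pi * r2\<^sup>2 - pi * r1\<^sup>2)"
    by (rule ennreal_minus) simp
  also have "pi * r2\<^sup>2 - pi * r1\<^sup>2 \<le> 2 * pi * D"
  proof -
    have "w0 + D \<ge> 0" using W0[OF w0] D by simp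
    then have "r2\<^sup>2 = w0 + D" unfolding r2_def by simp
    moreover have "r1\<^sup>2 = max 0 (w0 - D)" unfolding r1_def by simp
    ultimately have "r2\<^sup>2 - r1\<^sup>2 \<le> 2 * D" by linarith
    then show ?thesis by (simp add: right_diff_distrib[symmetric] mult.assoc) 
  qed
  finally show ?thesis by (simp add: ennreal_leI)
qed

lemma vol_from_W:
  fixes A :: "(real \<times> (real \<times> real)) set" and W :: "real \<Rightarrow> real set"
  assumes diam: "\<And>t w w'. w \<in> W t \<Longrightarrow> w' \<in> W t \<Longrightarrow> w' - w \<le> D" and D: "D \<ge> 0"
    and loc: "\<And>t. W t \<noteq> {} \<Longrightarrow> t \<in> {a..b}" and ab: "a \<le> b"
    and nn: "\<And>t w. w \<in> W t \<Longrightarrow> w \<ge> 0" and A: "A \<in> sets borel"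
    and sl: "\<And>t q. (t, q) \<in> A \<Longrightarrow> (norm q)\<^sup>2 \<in> W t"
  shows "emeasure lborel A \<le> ennreal (2 * pi * D * (b - a))"
proof -
  have "emeasure lborel A \<le> ennreal ((2 * pi * D) * (b - a))"
  proof (rule vol_by_slices[OF A _ ab])
    show "0 \<le> 2 * pi * D" using D by simp
    fix t
    show "emeasure lborel {q. (t, q) \<in> A} \<le> ennreal (2 * pi * D) * indicator {a..b} t"
    proof (cases "t \<in> {a..b}")
      case True
      have "emeasure lborel {q. (t, q) \<in> A} \<le> ennreal (2 * pi * D)"
        by (rule annulus_measure[of _ "W t"]) (use sl diam D nn in auto)
      then show ?thesis using True by simp
    next
      case False
      then have "W t = {}" using loc by blast
      then have e: "{q. (t, q) \<in> A} = {}" using sl by blast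
      show ?thesis by (simp only: e emeasure_empty) simp
    qed
  qed
  then show ?thesis by (simp add: mult.assoc)
qed

definition Jr :: "real \<times> real \<times> real \<Rightarrow> real" where
  "Jr p = sqrt (1 + (norm p)\<^sup>2)"

definition shellR :: "real \<Rightarrow> real \<Rightarrow> real \<Rightarrow> real \<Rightarrow> real \<Rightarrow> (real \<times> real \<times> real) set" where
  "shellR d e s h L = {p. norm p \<le> L \<and> \<bar>Jr p + e * Jr (p + (d, 0)) - s\<bar> \<le> h}"

lemma shellR_closed: "closed (shellR d e s h L)"
proof -
  have "shellR d e s h L = {p. norm p \<le> L} \<inter> {p. \<bar>Jr p + e * Jr (p + (d, 0)) - s\<bar> \<le> h}"
    unfolding shellR_def by auto
  moreover have "closed {p :: real \<times> real \<times> real. norm p \<le> L}"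
    by (intro closed_Collect_le continuous_intros)
  moreover have "closed {p. \<bar>Jr p + e * Jr (p + (d, 0)) - s\<bar> \<le> h}"
    unfolding Jr_def by (intro closed_Collect_le continuous_intros)
  ultimately show ?thesis by auto
qed

definition Wset :: "real \<Rightarrow> real \<Rightarrow> real \<Rightarrow> real \<Rightarrow> real \<Rightarrow> real \<Rightarrow> real set" where
  "Wset d e s h L t = {w. 0 \<le> w \<and> t\<^sup>2 + w \<le> L\<^sup>2 \<and>
      \<bar>sqrt (1 + t\<^sup>2 + w) + e * sqrt (1 + (t + d)\<^sup>2 + w) - s\<bar> \<le> h}"

lemma shellR_slice:
  assumes "(t, q) \<in> shellR d e s h L"
  shows "(norm q)\<^sup>2 \<in> Wset d e s h L t"
proof -
  have n: "norm (t, q) = sqrt (t\<^sup>2 + (norm q)\<^sup>2)" by (simp add: norm_Pair)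
  have n2: "(norm (t + d, q))\<^sup>2 = (t + d)\<^sup>2 + (norm q)\<^sup>2" by (simp add: norm_Pair)
  have pe: "(t, q) + (d, 0) = (t + d, q)" by simp
  have "norm (t, q) \<le> L" using assms unfolding shellR_def by auto
  then have L: "t\<^sup>2 + (norm q)\<^sup>2 \<le> L\<^sup>2" unfolding n
    by (metis abs_of_nonneg add_nonneg_nonneg real_sqrt_abs real_sqrt_le_iff real_sqrt_le_mono
        zero_le_power2 norm_ge_zero power2_le_iff_abs_le order_trans real_sqrt_ge_zero sqrt_le_D)
  have "Jr (t, q) = sqrt (1 + t\<^sup>2 + (norm q)\<^sup>2)" unfolding Jr_def n by (simp add: add.assoc)
  moreover have "Jr ((t, q) + (d, 0)) = sqrt (1 + (t + d)\<^sup>2 + (norm q)\<^sup>2)"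
    unfolding Jr_def pe n2 by (simp add: add.assoc)
  ultimately show ?thesis using assms L unfolding shellR_def Wset_def by auto
qed

lemma hyp_core:
  fixes P1 P2 Q1 Q2 h \<mu> s :: real
  assumes "0 < Q1" "0 < P1" "Q1 \<le> Q2" "P1 \<le> P2" "P1\<^sup>2 - Q1\<^sup>2 = P2\<^sup>2 - Q2\<^sup>2"
    "\<bar>P1 - Q1 - s\<bar> \<le> h" "\<bar>P2 - Q2 - s\<bar> \<le> h" "\<mu> \<le> \<bar>P1 - Q1\<bar>"
  shows "\<mu> * (Q2 - Q1) \<le> 2 * h * (P2 + Q2)"
proof -
  define H1 where "H1 = P1 - Q1"
  define H2 where "H2 = P2 - Q2"
  define \<sigma>1 where "\<sigma>1 = P1 + Q1"
  define \<sigma>2 where "\<sigma>2 = P2 + Q2"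
  have eq: "H1 * \<sigma>1 = H2 * \<sigma>2" unfolding H1_def H2_def \<sigma>1_def \<sigma>2_def
    using assms(5) by (simp add: power2_eq_square algebra_simps)
  have "(H1 - H2) * \<sigma>2 = H1 * (\<sigma>2 - \<sigma>1)" using eq by (simp add: algebra_simps)
  moreover have "\<sigma>2 - \<sigma>1 \<ge> 0" "\<sigma>2 \<ge> 0" unfolding \<sigma>1_def \<sigma>2_def using assms by linarith+
  ultimately have e2: "\<bar>H1\<bar> * (\<sigma>2 - \<sigma>1) = \<bar>H1 - H2\<bar> * \<sigma>2"
    by (metis abs_mult abs_of_nonneg)
  have hh: "\<bar>H1 - H2\<bar> \<le> 2 * h" unfolding H1_def H2_def using assms(6,7) by linarith
  have s2: "\<sigma>2 \<ge> 0" unfolding \<sigma>2_def using assms by linarith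
  have "\<bar>H1 - H2\<bar> * \<sigma>2 \<le> 2 * h * \<sigma>2" using hh s2 by (rule mult_right_mono)
  moreover have "\<mu> * (Q2 - Q1) \<le> \<bar>H1\<bar> * (Q2 - Q1)"
    using assms(3,8) unfolding H1_def by (intro mult_right_mono) auto
  moreover have "\<bar>H1\<bar> * (Q2 - Q1) \<le> \<bar>H1\<bar> * (\<sigma>2 - \<sigma>1)"
    unfolding \<sigma>1_def \<sigma>2_def using assms(4) by (intro mult_left_mono) auto
  ultimately show ?thesis using e2 unfolding \<sigma>2_def by linarith
qed

context
  fixes d e s h L t :: real
  assumes L: "L \<ge> 1" and d: "d > 0" and h: "h \<ge> 0"
begin

abbreviation "QQ w \<equiv> sqrt (1 + t\<^sup>2 + w)"
abbreviation "PP w \<equiv> sqrt (1 + (t + d)\<^sup>2 + w)"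

lemma W_basic:
  assumes "w \<in> Wset d e s h L t"
  shows "0 \<le> w" "t\<^sup>2 + w \<le> L\<^sup>2" "1 \<le> QQ w" "QQ w \<le> 1 + L" "0 < PP w"
    "PP w \<le> 1 + L + d" "\<bar>t\<bar> \<le> L" "(QQ w)\<^sup>2 = 1 + t\<^sup>2 + w" "(PP w)\<^sup>2 = 1 + (t + d)\<^sup>2 + w"
    "\<bar>QQ w + e * PP w - s\<bar> \<le> h"
proof -
  show w0: "0 \<le> w" and tw: "t\<^sup>2 + w \<le> L\<^sup>2" and "\<bar>QQ w + e * PP w - s\<bar> \<le> h"
    using assms unfolding Wset_def by auto
  show "1 \<le> QQ w" using w0 by simp
  show "QQ w \<le> 1 + L" using sqrt_le_1L[OF w0 tw] L by simp
  show "0 < PP w" using w0 by (simp add: add_pos_nonneg)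
  show "PP w \<le> 1 + L + d" using sqrt_le_1Ld[OF w0 tw] L d by simp
  have "t\<^sup>2 \<le> L\<^sup>2" using tw w0 by linarith
  then have "\<bar>t\<bar> \<le> \<bar>L\<bar>" by (simp add: abs_le_square_iff)
  then show "\<bar>t\<bar> \<le> L" using L by simp
  show "(QQ w)\<^sup>2 = 1 + t\<^sup>2 + w" using w0 by simp
  show "(PP w)\<^sup>2 = 1 + (t + d)\<^sup>2 + w" using w0 by simp
qed

lemma Q_diff:
  assumes "w1 \<in> Wset d e s h L t" "w2 \<in> Wset d e s h L t" "w1 \<le> w2"
  shows "(QQ w2 - QQ w1) * (QQ w2 + QQ w1) = w2 - w1" "QQ w1 \<le> QQ w2" "PP w1 \<le> PP w2"
proof -
  have "(QQ w2 - QQ w1) * (QQ w2 + QQ w1) = (QQ w2)\<^sup>2 - (QQ w1)\<^sup>2"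
    by (simp add: power2_eq_square algebra_simps)
  then show "(QQ w2 - QQ w1) * (QQ w2 + QQ w1) = w2 - w1"
    using W_basic(8)[OF assms(1)] W_basic(8)[OF assms(2)] by simp
  show "QQ w1 \<le> QQ w2" using assms(3) by simp
  show "PP w1 \<le> PP w2" using assms(3) by simp
qed

lemma ell_diam:
  assumes "e = 1" "w1 \<in> Wset d e s h L t" "w2 \<in> Wset d e s h L t"
  shows "w2 - w1 \<le> 4 * h * (1 + L)"
proof (cases "w1 \<le> w2")
  case True
  note q = Q_diff[OF assms(2,3) True]
  have a1: "\<bar>QQ w1 + PP w1 - s\<bar> \<le> h" using W_basic(10)[OF assms(2)] assms(1) by simp
  have a2: "\<bar>QQ w2 + PP w2 - s\<bar> \<le> h" using W_basic(10)[OF assms(3)] assms(1) by simp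
  have "QQ w2 - QQ w1 \<le> 2 * h" using a1 a2 q(3) by linarith
  moreover have "QQ w2 + QQ w1 \<le> (1 + L) + (1 + L)"
    using W_basic(4)[OF assms(2)] W_basic(4)[OF assms(3)] by (intro add_mono)
  ultimately have "(QQ w2 - QQ w1) * (QQ w2 + QQ w1) \<le> (2 * h) * ((1 + L) + (1 + L))"
    using q(2) W_basic(3)[OF assms(2)] h by (intro mult_mono) auto
  then show ?thesis using q(1) by (simp add: algebra_simps)
next
  case False
  have "0 \<le> 4 * h * (1 + L)" using h L by simp
  then show ?thesis using False by linarith
qed

lemma hyp_diam:
  assumes "e = -1" "w1 \<in> Wset d e s h L t" "w2 \<in> Wset d e s h L t" "w1 \<le> w2"
    "\<mu> \<ge> 0" "\<mu> \<le> \<bar>PP w1 - QQ w1\<bar>"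
  shows "\<mu> * (w2 - w1) \<le> 4 * h * (2 + 2 * L + d) * (1 + L)"
proof -
  note q = Q_diff[OF assms(2,3,4)]
  note b1 = W_basic[OF assms(2)] and b2 = W_basic[OF assms(3)]
  have a1: "\<bar>PP w1 - QQ w1 - (- s)\<bar> \<le> h" using b1(10) assms(1) by simp
  have a2: "\<bar>PP w2 - QQ w2 - (- s)\<bar> \<le> h" using b2(10) assms(1) by simp
  have sq: "(PP w1)\<^sup>2 - (QQ w1)\<^sup>2 = (PP w2)\<^sup>2 - (QQ w2)\<^sup>2" using b1(8,9) b2(8,9) by simp
  have c: "\<mu> * (QQ w2 - QQ w1) \<le> 2 * h * (PP w2 + QQ w2)"
  proof (rule hyp_core[OF _ b1(5) q(2,3) sq a1 a2 assms(6)])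
    show "0 < QQ w1" using b1(3) by linarith
  qed
  have "2 * h * (PP w2 + QQ w2) \<le> 2 * h * (2 + 2 * L + d)"
    using b2(4,6) h by (intro mult_left_mono) auto
  with c have c2: "\<mu> * (QQ w2 - QQ w1) \<le> 2 * h * (2 + 2 * L + d)" by linarith
  have "\<mu> * (w2 - w1) = (\<mu> * (QQ w2 - QQ w1)) * (QQ w2 + QQ w1)" using q(1) by simp
  also have "\<dots> \<le> (2 * h * (2 + 2 * L + d)) * (2 * (1 + L))"
  proof (rule mult_mono)
    show "\<mu> * (QQ w2 - QQ w1) \<le> 2 * h * (2 + 2 * L + d)" by (rule c2)
    have "QQ w2 + QQ w1 \<le> (1 + L) + (1 + L)" using b1(4) b2(4) by (intro add_mono)
    then show "QQ w2 + QQ w1 \<le> 2 * (1 + L)" by simp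
    show "0 \<le> 2 * h * (2 + 2 * L + d)" using h L d by simp
    show "0 \<le> QQ w2 + QQ w1" using b1(3) b2(3) by linarith
  qed
  also have "\<dots> = 4 * h * (2 + 2 * L + d) * (1 + L)" by (simp add: algebra_simps)
  finally show ?thesis .
qed

lemma hyp_key:
  assumes "w \<in> Wset d e s h L t"
  shows "(PP w - QQ w) * (PP w + QQ w) = d * (2 * t + d)"
proof -
  have "(PP w - QQ w) * (PP w + QQ w) = (PP w)\<^sup>2 - (QQ w)\<^sup>2" by (simp add: power2_eq_square algebra_simps)
  also have "\<dots> = d * (2 * t + d)" using W_basic(8,9)[OF assms] by (simp add: power2_eq_square algebra_simps)
  finally show ?thesis .
qed

lemma hyp_mu_far:
  assumes "w \<in> Wset d e s h L t" "d \<ge> 4 * L"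
  shows "d / 4 \<le> \<bar>PP w - QQ w\<bar>"
proof -
  note b = W_basic[OF assms(1)]
  have "2 * t + d \<ge> d / 2" using b(7) assms(2) by linarith
  then have D: "d * (2 * t + d) \<ge> d * (d / 2)" using d by (intro mult_left_mono) auto
  have sig: "PP w + QQ w \<le> 2 * d" using b(4,6) assms(2) L by linarith
  have sp: "PP w + QQ w > 0" using b(3,5) by linarith
  have "d * (d / 2) \<le> (PP w - QQ w) * (PP w + QQ w)" using D hyp_key[OF assms(1)] by simp
  also have "\<dots> \<le> \<bar>PP w - QQ w\<bar> * (2 * d)"
  proof -
    have "(PP w - QQ w) * (PP w + QQ w) \<le> \<bar>PP w - QQ w\<bar> * (PP w + QQ w)"
      using sp by (intro mult_right_mono) auto
    also have "\<dots> \<le> \<bar>PP w - QQ w\<bar> * (2 * d)"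
      using sig by (intro mult_left_mono) auto
    finally show ?thesis .
  qed
  finally have "d * (d / 2) \<le> \<bar>PP w - QQ w\<bar> * (2 * d)" .
  then show ?thesis using d by (simp add: field_simps)
qed

lemma hyp_mu_s:
  assumes "e = -1" "w \<in> Wset d e s h L t"
  shows "\<bar>s\<bar> - h \<le> \<bar>PP w - QQ w\<bar>"
proof -
  have "\<bar>QQ w - PP w - s\<bar> \<le> h" using W_basic(10)[OF assms(2)] assms(1) by simp
  then show ?thesis by linarith
qed

lemma hyp_loc:
  assumes "e = -1" "w \<in> Wset d e s h L t"
  shows "d * \<bar>2 * t + d\<bar> \<le> (\<bar>s\<bar> + h) * (2 + 2 * L + d)"
proof -
  note b = W_basic[OF assms(2)]
  have "\<bar>QQ w - PP w - s\<bar> \<le> h" using b(10) assms(1) by simp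
  then have H: "\<bar>PP w - QQ w\<bar> \<le> \<bar>s\<bar> + h" by linarith
  have sig: "PP w + QQ w \<le> 2 + 2 * L + d" "PP w + QQ w \<ge> 0" using b(3,4,5,6) by linarith+
  have "d * \<bar>2 * t + d\<bar> = \<bar>PP w - QQ w\<bar> * (PP w + QQ w)"
  proof -
    have "d * \<bar>2 * t + d\<bar> = \<bar>d * (2 * t + d)\<bar>" using d by (simp add: abs_mult)
    also have "\<dots> = \<bar>(PP w - QQ w) * (PP w + QQ w)\<bar>" using hyp_key[OF assms(2)] by simp
    also have "\<dots> = \<bar>PP w - QQ w\<bar> * (PP w + QQ w)" using sig(2) by (simp add: abs_mult)
    finally show ?thesis .
  qed
  also have "\<dots> \<le> (\<bar>s\<bar> + h) * (2 + 2 * L + d)"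
    using H sig by (intro mult_mono) auto
  finally show ?thesis .
qed

end

lemma loc_interval:
  fixes d t X :: real
  assumes "d > 0" "d * \<bar>2 * t + d\<bar> \<le> X"
  shows "t \<in> {(- d - X / d) / 2 .. (- d + X / d) / 2}"
proof -
  have "\<bar>2 * t + d\<bar> \<le> X / d" using assms by (simp add: field_simps mult.commute)
  then show ?thesis by (auto simp: abs_le_iff field_simps)
qed

context
  fixes d e s h L :: real
  assumes L: "L \<ge> 1" and d: "d > 0" and h: "h \<ge> 1"
begin

lemma h0: "h \<ge> 0" using h by simp

lemma shellR_borel: "shellR d e s h L \<in> sets borel"
  using shellR_closed by (rule borel_closed)

lemma W_nonneg: "w \<in> Wset d e s h L t \<Longrightarrow> w \<ge> 0"
  unfolding Wset_def by auto

lemma vol_ell: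
  assumes "e = 1"
  shows "emeasure lborel (shellR d e s h L) \<le> ennreal (32 * pi * h * L\<^sup>2)"
proof -
  have "emeasure lborel (shellR d e s h L) \<le> ennreal (2 * pi * (8 * h * L) * (L - (- L)))"
  proof (rule vol_from_W[where W = "Wset d e s h L"])
    fix t w w' assume "w \<in> Wset d e s h L t" "w' \<in> Wset d e s h L t"
    then have "w' - w \<le> 4 * h * (1 + L)" using ell_diam[OF L d _ assms] h by simp
    also have "\<dots> \<le> 4 * h * (2 * L)" using h L by (intro mult_left_mono) auto
    finally show "w' - w \<le> 8 * h * L" by simp
  next
    show "0 \<le> 8 * h * L" using h L by simp
  next
    fix t assume "Wset d e s h L t \<noteq> {}"
    then obtain w where w: "w \<in> Wset d e s h L t" by auto
    then show "t \<in> {- L..L}" using W_basic(7)[OF L d h0 w] by (auto simp: abs_le_iff)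
  qed (use L shellR_borel shellR_slice W_nonneg in auto)
  also have "2 * pi * (8 * h * L) * (L - (- L)) = 32 * pi * h * L\<^sup>2"
    by (simp add: power2_eq_square algebra_simps)
  finally show ?thesis .
qed

lemma vol_hyp_far:
  assumes "e = -1" "d \<ge> 4 * L"
  shows "emeasure lborel (shellR d e s h L) \<le> ennreal (256 * pi * h * L\<^sup>2)"
proof -
  have "emeasure lborel (shellR d e s h L) \<le> ennreal (2 * pi * (64 * h * L) * (L - (- L)))"
  proof (rule vol_from_W[where W = "Wset d e s h L"])
    fix t w w' assume w: "w \<in> Wset d e s h L t" and w': "w' \<in> Wset d e s h L t"
    show "w' - w \<le> 64 * h * L"
    proof (cases "w \<le> w'")
      case True
      have mu: "d / 4 \<le> \<bar>sqrt (1 + t\<^sup>2 + w) - sqrt (1 + (t + d)\<^sup>2 + w)\<bar>"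
        using hyp_mu_far[OF L d h0 w assms(2)] by (simp add: abs_minus_commute)
      have "d / 4 * (w' - w) \<le> 4 * h * (2 + 2 * L + d) * (1 + L)"
        by (rule hyp_diam[OF L d h0 assms(1) w w' True]) (use d hyp_mu_far[OF L d h0 w assms(2)] in auto)
      also have "\<dots> \<le> 4 * h * (2 * d) * (2 * L)"
        using h L assms(2) by (intro mult_mono) auto
      finally have "d * (w' - w) \<le> d * (64 * h * L)" by (simp add: algebra_simps)
      then show ?thesis using d by simp
    next
      case False
      have "0 \<le> 64 * h * L" using h L by simp
      then show ?thesis using False by linarith
    qed
  next
    show "0 \<le> 64 * h * L" using h L by simp
  next
    fix t assume "Wset d e s h L t \<noteq> {}"
    then obtain w where w: "w \<in> Wset d e s h L t" by auto
    then show "t \<in> {- L..L}" using W_basic(7)[OF L d h0 w] by (auto simp: abs_le_iff)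
  qed (use L shellR_borel shellR_slice W_nonneg in auto)
  also have "2 * pi * (64 * h * L) * (L - (- L)) = 256 * pi * h * L\<^sup>2"
    by (simp add: power2_eq_square algebra_simps)
  finally show ?thesis .
qed

lemma vol_hyp_small:
  assumes "e = -1" "d < 4 * L" "\<bar>s\<bar> \<le> 2 * h"
  shows "emeasure lborel (shellR d e s h L) \<le> ennreal (48 * pi * h * L ^ 3 / d)"
proof -
  define X where "X = 24 * h * L"
  have "emeasure lborel (shellR d e s h L)
      \<le> ennreal (2 * pi * L\<^sup>2 * ((- d + X / d) / 2 - (- d - X / d) / 2))"
  proof (rule vol_from_W[where W = "Wset d e s h L"])
    fix t w w' assume w: "w \<in> Wset d e s h L t" and w': "w' \<in> Wset d e s h L t"
    have "0 \<le> w" "t\<^sup>2 + w' \<le> L\<^sup>2" using W_basic(1)[OF L d h0 w] W_basic(2)[OF L d h0 w'] by auto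
    moreover have "t\<^sup>2 \<ge> 0" by simp
    ultimately show "w' - w \<le> L\<^sup>2" by linarith
  next
    show "0 \<le> L\<^sup>2" by simp
  next
    fix t assume "Wset d e s h L t \<noteq> {}"
    then obtain w where w: "w \<in> Wset d e s h L t" by auto
    have "d * \<bar>2 * t + d\<bar> \<le> (\<bar>s\<bar> + h) * (2 + 2 * L + d)"
      by (rule hyp_loc[OF L d h0 assms(1) w])
    also have "\<dots> \<le> (3 * h) * (8 * L)" using assms h L d by (intro mult_mono) auto
    finally have "d * \<bar>2 * t + d\<bar> \<le> X" unfolding X_def by simp
    then show "t \<in> {(- d - X / d) / 2 .. (- d + X / d) / 2}" by (rule loc_interval[OF d])
  next
    show "(- d - X / d) / 2 \<le> (- d + X / d) / 2" unfolding X_def using h L d by simp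
  qed (use L shellR_borel shellR_slice W_nonneg in auto)
  also have "2 * pi * L\<^sup>2 * ((- d + X / d) / 2 - (- d - X / d) / 2) = 48 * pi * h * L ^ 3 / d"
    unfolding X_def by (simp add: power2_eq_square power3_eq_cube field_simps)
  finally show ?thesis .
qed

lemma vol_hyp_big:
  assumes "e = -1" "d < 4 * L" "\<bar>s\<bar> > 2 * h"
  shows "emeasure lborel (shellR d e s h L) \<le> ennreal (3072 * pi * h * L ^ 3 / d)"
proof -
  define \<mu> where "\<mu> = \<bar>s\<bar> - h"
  have mu: "\<mu> > 0" "\<bar>s\<bar> + h \<le> 3 * \<mu>" unfolding \<mu>_def using assms h by auto
  define X where "X = (\<bar>s\<bar> + h) * (8 * L)"
  define D where "D = 64 * h * L\<^sup>2 / \<mu>"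
  have "emeasure lborel (shellR d e s h L)
      \<le> ennreal (2 * pi * D * ((- d + X / d) / 2 - (- d - X / d) / 2))"
  proof (rule vol_from_W[where W = "Wset d e s h L"])
    fix t w w' assume w: "w \<in> Wset d e s h L t" and w': "w' \<in> Wset d e s h L t"
    show "w' - w \<le> D"
    proof (cases "w \<le> w'")
      case True
      have "\<mu> * (w' - w) \<le> 4 * h * (2 + 2 * L + d) * (1 + L)"
        by (rule hyp_diam[OF L d h0 assms(1) w w' True])
           (use mu hyp_mu_s[OF L d h0 assms(1) w] in \<open>auto simp: \<mu>_def\<close>)
      also have "\<dots> \<le> 4 * h * (8 * L) * (2 * L)"
        using h L d assms(2) by (intro mult_mono) auto
      finally have "\<mu> * (w' - w) \<le> 64 * h * L\<^sup>2" by (simp add: power2_eq_square algebra_simps)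
      then show ?thesis unfolding D_def using mu(1) by (simp add: field_simps mult.commute)
    next
      case False
      have "0 \<le> D" unfolding D_def using h L mu by simp
      then show ?thesis using False by linarith
    qed
  next
    show "0 \<le> D" unfolding D_def using h L mu by simp
  next
    fix t assume "Wset d e s h L t \<noteq> {}"
    then obtain w where w: "w \<in> Wset d e s h L t" by auto
    have "d * \<bar>2 * t + d\<bar> \<le> (\<bar>s\<bar> + h) * (2 + 2 * L + d)"
      by (rule hyp_loc[OF L d h0 assms(1) w])
    also have "\<dots> \<le> (\<bar>s\<bar> + h) * (8 * L)" using assms h L d by (intro mult_left_mono) auto
    finally have "d * \<bar>2 * t + d\<bar> \<le> X" unfolding X_def by simp
    then show "t \<in> {(- d - X / d) / 2 .. (- d + X / d) / 2}" by (rule loc_interval[OF d])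
  next
    show "(- d - X / d) / 2 \<le> (- d + X / d) / 2" unfolding X_def using h L d by simp
  qed (use L shellR_borel shellR_slice W_nonneg in auto)
  also have "2 * pi * D * ((- d + X / d) / 2 - (- d - X / d) / 2)
      = 1024 * pi * h * L ^ 3 / d * ((\<bar>s\<bar> + h) / \<mu>)"
    unfolding X_def D_def using mu(1) d by (simp add: power2_eq_square power3_eq_cube field_simps)
  also have "\<dots> \<le> 1024 * pi * h * L ^ 3 / d * 3"
    using mu h L d by (intro mult_left_mono) (auto simp: field_simps)
  also have "\<dots> = 3072 * pi * h * L ^ 3 / d" by simp
  finally show ?thesis by (simp only: ennreal_leI)
qed

lemma vol_shell:
  assumes "e = 1 \<or> e = -1"
  shows "emeasure lborel (shellR d e s h L) \<le> ennreal (3072 * pi * h * (L\<^sup>2 + L ^ 3 / d))"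
proof -
  have p: "0 \<le> pi * h * L\<^sup>2" "0 \<le> pi * h * L ^ 3 / d" using h L d by auto
  have B: "32 * pi * h * L\<^sup>2 \<le> 3072 * pi * h * (L\<^sup>2 + L ^ 3 / d)"
          "256 * pi * h * L\<^sup>2 \<le> 3072 * pi * h * (L\<^sup>2 + L ^ 3 / d)"
          "48 * pi * h * L ^ 3 / d \<le> 3072 * pi * h * (L\<^sup>2 + L ^ 3 / d)"
          "3072 * pi * h * L ^ 3 / d \<le> 3072 * pi * h * (L\<^sup>2 + L ^ 3 / d)"
  proof -
    define x where "x = pi * h * L\<^sup>2"
    define y where "y = pi * h * L ^ 3 / d"
    have e1: "3072 * pi * h * (L\<^sup>2 + L ^ 3 / d) = 3072 * x + 3072 * y"
      unfolding x_def y_def by (simp add: algebra_simps)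
    have e2: "32 * pi * h * L\<^sup>2 = 32 * x" "256 * pi * h * L\<^sup>2 = 256 * x"
      "48 * pi * h * L ^ 3 / d = 48 * y" "3072 * pi * h * L ^ 3 / d = 3072 * y"
      unfolding x_def y_def by simp_all
    have "x \<ge> 0" "y \<ge> 0" using p unfolding x_def y_def by auto
    then show "32 * pi * h * L\<^sup>2 \<le> 3072 * pi * h * (L\<^sup>2 + L ^ 3 / d)"
          "256 * pi * h * L\<^sup>2 \<le> 3072 * pi * h * (L\<^sup>2 + L ^ 3 / d)"
          "48 * pi * h * L ^ 3 / d \<le> 3072 * pi * h * (L\<^sup>2 + L ^ 3 / d)"
          "3072 * pi * h * L ^ 3 / d \<le> 3072 * pi * h * (L\<^sup>2 + L ^ 3 / d)"
      unfolding e1 e2 by linarith+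
  qed
  show ?thesis
  proof (cases "e = 1")
    case True
    then show ?thesis using vol_ell B(1) by (meson ennreal_leI order_trans)
  next
    case False
    then have e: "e = -1" using assms by auto
    show ?thesis
    proof (cases "d \<ge> 4 * L")
      case True
      then show ?thesis using vol_hyp_far[OF e] B(2) by (meson ennreal_leI order_trans)
    next
      case False
      then have dl: "d < 4 * L" by simp
      show ?thesis
      proof (cases "\<bar>s\<bar> \<le> 2 * h")
        case True
        then show ?thesis using vol_hyp_small[OF e dl] B(3) by (meson ennreal_leI order_trans)
      next
        case False
        then show ?thesis using vol_hyp_big[OF e dl] B(4) by (meson ennreal_leI order_trans not_le)
      qed
    qed
  qed
qed

end

definition rv :: "zvec \<Rightarrow> real \<times> real \<times> real" where
  "rv x = (of_int (fst x), of_int (fst (snd x)), of_int (snd (snd x)))"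

lemma rv_add [simp]: "rv (x + y) = rv x + rv y"
  by (simp add: rv_def)
lemma rv_diff [simp]: "rv (x - y) = rv x - rv y"
  by (simp add: rv_def)
lemma rv_uminus [simp]: "rv (- x) = - rv x"
  by (simp add: rv_def)
lemma rv_zero [simp]: "rv 0 = 0"
  by (simp add: rv_def zero_prod_def)
lemma rv_eq0 [simp]: "rv x = 0 \<longleftrightarrow> x = 0"
  by (cases x) (auto simp: rv_def zero_prod_def)

lemma vadd_eq: "vadd x y = x + y"
  by (cases x; cases y) (simp add: vadd_def)

lemma norm3: "norm (a :: real, b :: real, c :: real) = sqrt (a\<^sup>2 + b\<^sup>2 + c\<^sup>2)"
  by (simp add: norm_Pair add.assoc)

lemma znorm_rv: "znorm x = norm (rv x)"
  by (simp add: znorm_def rv_def norm3)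

lemma Jr_norm: "Jr p = norm (1::real, p)"
  by (simp add: Jr_def norm_Pair)

lemma jbr_rv: "jbr x = Jr (rv x)"
  by (simp add: jbr_def Jr_def znorm_rv)

lemma Jr_ge1: "Jr p \<ge> 1"
  by (simp add: Jr_def)

lemma Jr_pos: "Jr p > 0"
  using Jr_ge1[of p] by linarith

lemma Jr_lip: "\<bar>Jr p - Jr q\<bar> \<le> norm (p - q)"
proof -
  have "\<bar>norm (1::real, p) - norm (1::real, q)\<bar> \<le> norm ((1::real, p) - (1, q))"
    by (rule norm_triangle_ineq3)
  also have "(1::real, p) - (1, q) = (0, p - q)" by simp
  also have "norm (0::real, p - q) = norm (p - q)" by (simp add: norm_Pair)
  finally show ?thesis by (simp add: Jr_norm)
qed

lemma Jr_le: "Jr p \<le> 1 + norm p"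
proof -
  have "Jr p \<le> Jr 0 + norm (p - 0)" using Jr_lip[of p 0] by linarith
  then show ?thesis by (simp add: Jr_def)
qed

lemma Jr_ge_norm: "norm p \<le> Jr p"
  unfolding Jr_def by (rule real_le_rsqrt) simp

lemma comp_le_norm:
  fixes a b c :: real
  shows "\<bar>a\<bar> \<le> norm (a, b, c)" "\<bar>b\<bar> \<le> norm (a, b, c)" "\<bar>c\<bar> \<le> norm (a, b, c)"
  unfolding norm3 by (auto intro!: real_le_rsqrt simp: power2_eq_square)

lemma int_sep:
  assumes "x \<noteq> y"
  shows "1 \<le> norm (rv x - rv y)"
proof -
  obtain a b c where xyz: "x - y = (a, b, c)" by (metis prod.exhaust)
  have "x - y \<noteq> 0" using assms by simp
  then have nz: "a \<noteq> 0 \<or> b \<noteq> 0 \<or> c \<noteq> 0" using xyz by (auto simp: zero_prod_def)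
  have "rv x - rv y = (of_int a, of_int b, of_int c)" using xyz rv_diff[of x y] by (simp add: rv_def)
  moreover have "1 \<le> \<bar>real_of_int a\<bar> \<or> 1 \<le> \<bar>real_of_int b\<bar> \<or> 1 \<le> \<bar>real_of_int c\<bar>"
    using nz by linarith
  ultimately show ?thesis using comp_le_norm[where a="of_int a" and b="of_int b" and c="of_int c"] by auto
qed

lemma ball_count:
  fixes L :: real
  assumes "L \<ge> 0"
  shows "finite {x. norm (rv x) \<le> L}" "real (card {x. norm (rv x) \<le> L}) \<le> (2 * L + 1) ^ 3"
proof -
  define n where "n = \<lfloor>L\<rfloor>"
  have sub: "{x. norm (rv x) \<le> L} \<subseteq> {-n..n} \<times> {-n..n} \<times> {-n..n}"
  proof
    fix x assume "x \<in> {x. norm (rv x) \<le> L}"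
    then have le: "norm (rv x) \<le> L" by simp
    obtain a b c where x: "x = (a, b, c)" by (metis prod.exhaust)
    have nx: "norm (rv x) = norm (real_of_int a, real_of_int b, real_of_int c)" by (simp add: x rv_def)
    have "\<bar>real_of_int a\<bar> \<le> L" using comp_le_norm(1)[where a="of_int a" and b="of_int b" and c="of_int c"] le nx by linarith
    moreover have "\<bar>real_of_int b\<bar> \<le> L" using comp_le_norm(2)[where a="of_int a" and b="of_int b" and c="of_int c"] le nx by linarith
    moreover have "\<bar>real_of_int c\<bar> \<le> L" using comp_le_norm(3)[where a="of_int a" and b="of_int b" and c="of_int c"] le nx by linarith
    ultimately have "\<bar>real_of_int a\<bar> \<le> L" "\<bar>real_of_int b\<bar> \<le> L" "\<bar>real_of_int c\<bar> \<le> L" by auto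
    then have "\<bar>a\<bar> \<le> n" "\<bar>b\<bar> \<le> n" "\<bar>c\<bar> \<le> n" unfolding n_def by (simp_all add: le_floor_iff)
    then show "x \<in> {-n..n} \<times> {-n..n} \<times> {-n..n}" using x by auto
  qed
  show "finite {x. norm (rv x) \<le> L}" by (rule finite_subset[OF sub]) auto
  have "card {x. norm (rv x) \<le> L} \<le> card ({-n..n} \<times> {-n..n} \<times> {-n..n})"
    by (rule card_mono[OF _ sub]) auto
  also have "\<dots> = (nat (2 * n + 1)) ^ 3" by (simp add: card_cartesian_product power3_eq_cube)
  finally have "real (card {x. norm (rv x) \<le> L}) \<le> real (nat (2 * n + 1)) ^ 3"
    by (metis of_nat_le_iff of_nat_power)
  also have "real (nat (2 * n + 1)) \<le> 2 * L + 1"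
    using assms unfolding n_def by (simp add: of_nat_nat)
  then have "real (nat (2 * n + 1)) ^ 3 \<le> (2 * L + 1) ^ 3"
    by (intro power_mono) auto
  finally show "real (card {x. norm (rv x) \<le> L}) \<le> (2 * L + 1) ^ 3" .
qed

definition hh :: "real \<times> real \<times> real \<Rightarrow> real \<times> real \<times> real \<Rightarrow> real \<times> real \<times> real" where
  "hh v x = (if v = 0 then x else x - (2 * inner v x / inner v v) *\<^sub>R v)"

lemma hh_add: "hh v (x + y) = hh v x + hh v y"
  by (simp add: hh_def inner_add_right add_divide_distrib scaleR_add_left algebra_simps)

lemma hh_inner: "inner (hh v x) (hh v y) = inner x y"
proof (cases "v = 0")
  case True then show ?thesis by (simp add: hh_def)
next
  case False
  then have vv: "inner v v \<noteq> 0" by simp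
  show ?thesis using vv unfolding hh_def
    by (simp add: False inner_diff_left inner_diff_right inner_commute field_simps power2_eq_square)
qed

lemma hh_norm: "norm (hh v x) = norm x"
  using hh_inner[of v x x] by (simp add: norm_eq_sqrt_inner)

lemma hh_dist: "norm (hh v x - hh v y) = norm (x - y)"
proof -
  have "hh v x = hh v (x - y) + hh v y" using hh_add[of v "x - y" y] by simp
  then have "hh v x - hh v y = hh v (x - y)" by simp
  then show ?thesis by (simp add: hh_norm)
qed

lemma hh_target:
  fixes b :: "real \<times> real \<times> real"
  defines "v \<equiv> b - (norm b, 0)"
  shows "hh v b = (norm b, 0)"
proof (cases "v = 0")
  case True then show ?thesis by (simp add: hh_def v_def)
next
  case False
  define d where "d = norm b"
  define u :: "real \<times> real \<times> real" where "u = (1, 0)"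
  have du: "(norm b, 0) = d *\<^sub>R u" by (simp add: d_def u_def)
  have uu: "inner u u = 1" by (simp add: u_def)
  have bb: "inner b b = d\<^sup>2" by (simp add: d_def power2_norm_eq_inner)
  have v: "v = b - d *\<^sub>R u" by (simp add: v_def du)
  have vv: "inner v v = 2 * d\<^sup>2 - 2 * d * inner b u"
    unfolding v using uu bb by (simp add: inner_diff_left inner_diff_right inner_commute power2_eq_square algebra_simps)
  have vb: "inner v b = d\<^sup>2 - d * inner b u"
    unfolding v using bb by (simp add: inner_diff_left inner_diff_right inner_commute)
  have "inner v v \<noteq> 0" using False by simp
  moreover have "2 * inner v b = inner v v" using vv vb by (simp add: algebra_simps)
  ultimately have c1: "2 * inner v b / inner v v = 1" by (metis divide_self)
  have "hh v b = b - (2 * inner v b / inner v v) *\<^sub>R v" using False by (simp add: hh_def)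
  also have "\<dots> = b - v" by (simp only: c1 scaleR_one)
  finally have "hh v b = b - v" .
  then show ?thesis by (simp add: v_def)
qed

lemma ball_vol3: "emeasure lborel (ball (c :: real \<times> real \<times> real) (1/2)) = ennreal (pi / 6)"
proof -
  have "emeasure lborel (ball c (1/2)) = ennreal (unit_ball_vol (real DIM(real \<times> real \<times> real)) * (1/2) ^ DIM(real \<times> real \<times> real))"
    by (rule emeasure_ball) simp
  also have "\<dots> = ennreal (pi / 6)" by (simp add: unit_ball_vol_3)
  finally show ?thesis .
qed

lemma count_shell:
  fixes b :: "real \<times> real \<times> real" and F :: "zvec set"
  assumes b: "b \<noteq> 0" and e: "e = 1 \<or> e = -1" and L: "L \<ge> 1" and fin: "finite F"
    and F: "\<And>x. x \<in> F \<Longrightarrow> norm (rv x) \<le> L \<and> \<bar>Jr (rv x) + e * Jr (rv x + b) - s\<bar> \<le> 1"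
  shows "real (card F) \<le> 294912 * (L\<^sup>2 + L ^ 3 / norm b)"
proof -
  define d where "d = norm b"
  have d: "d > 0" using b by (simp add: d_def)
  define v where "v = b - (d, 0)"
  define f where "f = hh v"
  have fb: "f b = (d, 0)" unfolding f_def v_def d_def by (rule hh_target)
  define q where "q x = f (rv x)" for x
  define B where "B x = ball (q x) (1/2)" for x
  have disj: "disjoint_family_on B F"
  unfolding disjoint_family_on_def
  proof (intro ballI impI)
    fix x y assume "x \<in> F" "y \<in> F" "x \<noteq> y"
    have sep: "1 \<le> norm (q x - q y)" unfolding q_def f_def hh_dist using int_sep[OF \<open>x \<noteq> y\<close>] .
    show "B x \<inter> B y = {}"
    proof (rule ccontr)
      assume "B x \<inter> B y \<noteq> {}"
      then obtain z where "dist (q x) z < 1/2" "dist (q y) z < 1/2" unfolding B_def by auto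
      then have "norm (q x - q y) < 1" using dist_triangle_half_l[of "q x" z 1 "q y"] by (simp add: dist_norm dist_commute)
      then show False using sep by simp
    qed
  qed
  have sub: "(\<Union>x\<in>F. B x) \<subseteq> shellR d e s 2 (L + 1)"
  proof
    fix z assume "z \<in> (\<Union>x\<in>F. B x)"
    then obtain x where x: "x \<in> F" and zx: "norm (z - q x) < 1/2"
      unfolding B_def by (auto simp: dist_norm norm_minus_commute)
    have nq: "norm (q x) = norm (rv x)" unfolding q_def f_def by (rule hh_norm)
    have Jq: "Jr (q x) = Jr (rv x)" unfolding Jr_def nq ..
    have "q x + (d, 0) = f (rv x + b)" unfolding q_def f_def using fb hh_add unfolding f_def by simp
    then have Jq2: "Jr (q x + (d, 0)) = Jr (rv x + b)" unfolding Jr_def f_def by (simp add: hh_norm)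
    have Fx: "norm (rv x) \<le> L" "\<bar>Jr (rv x) + e * Jr (rv x + b) - s\<bar> \<le> 1" using F[OF x] by auto
    have "norm z \<le> norm (q x) + norm (z - q x)" by (metis norm_triangle_sub add.commute)
    then have nz: "norm z \<le> L + 1" using nq Fx(1) zx by linarith
    have l1: "\<bar>Jr z - Jr (q x)\<bar> \<le> norm (z - q x)" by (rule Jr_lip)
    have l2: "\<bar>Jr (z + (d, 0)) - Jr (q x + (d, 0))\<bar> \<le> norm (z - q x)"
      using Jr_lip[of "z + (d, 0)" "q x + (d, 0)"] by simp
    have "\<bar>e * Jr (z + (d, 0)) - e * Jr (q x + (d, 0))\<bar> \<le> norm (z - q x)"
      using e l2 by (auto simp: abs_minus_commute)
    then have a: "\<bar>e * Jr (z + (d, 0)) - e * Jr (rv x + b)\<bar> \<le> norm (z - q x)" using Jq2 by simp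
    have b: "\<bar>Jr z - Jr (rv x)\<bar> \<le> norm (z - q x)" using l1 Jq by simp
    have "\<bar>Jr z + e * Jr (z + (d, 0)) - s\<bar> \<le> 2"
      using a b Fx(2) zx by linarith
    then show "z \<in> shellR d e s 2 (L + 1)" unfolding shellR_def using nz by simp
  qed
  have "(\<Sum>x\<in>F. emeasure lborel (B x)) = emeasure lborel (\<Union>x\<in>F. B x)"
    by (rule sum_emeasure[OF _ disj fin]) (auto simp: B_def)
  also have "\<dots> \<le> emeasure lborel (shellR d e s 2 (L + 1))"
    using sub by (intro emeasure_mono) (auto intro: borel_closed[OF shellR_closed])
  also have "\<dots> \<le> ennreal (3072 * pi * 2 * ((L + 1)\<^sup>2 + (L + 1) ^ 3 / d))"
    by (rule vol_shell) (use L d e in auto)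
  finally have "ennreal (real (card F)) * ennreal (pi / 6) \<le> ennreal (3072 * pi * 2 * ((L + 1)\<^sup>2 + (L + 1) ^ 3 / d))"
    by (simp add: B_def ball_vol3 ennreal_of_nat_eq_real_of_nat)
  then have "ennreal (real (card F) * (pi / 6)) \<le> ennreal (3072 * pi * 2 * ((L + 1)\<^sup>2 + (L + 1) ^ 3 / d))"
    by (subst ennreal_mult) auto
  then have c1: "real (card F) * (pi / 6) \<le> 3072 * pi * 2 * ((L + 1)\<^sup>2 + (L + 1) ^ 3 / d)"
    using d L by (subst (asm) ennreal_le_iff) (auto intro!: add_nonneg_nonneg)
  have "(L + 1)\<^sup>2 \<le> (2 * L)\<^sup>2" using L by (intro power_mono) auto
  then have "(L + 1)\<^sup>2 \<le> 4 * L\<^sup>2" by (simp add: power_mult_distrib)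
  moreover have c3: "(L + 1) ^ 3 / d \<le> 8 * L ^ 3 / d"
  proof -
    have "(L + 1) ^ 3 \<le> (2 * L) ^ 3" using L by (intro power_mono) auto
    then show ?thesis using d by (simp add: divide_right_mono power_mult_distrib)
  qed
  ultimately have "(L + 1)\<^sup>2 + (L + 1) ^ 3 / d \<le> 8 * (L\<^sup>2 + L ^ 3 / d)"
  proof -
    have gen: "a \<le> 4 * x \<Longrightarrow> b \<le> 8 * y \<Longrightarrow> 0 \<le> x \<Longrightarrow> a + b \<le> 8 * (x + y)" for a b x y :: real
      unfolding distrib_left by linarith
    have "(L + 1) ^ 3 / d \<le> 8 * (L ^ 3 / d)" using c3 by simp
    then show ?thesis by (rule gen[OF \<open>(L + 1)\<^sup>2 \<le> 4 * L\<^sup>2\<close>]) simp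
  qed
  then have "real (card F) * (pi / 6) \<le> 3072 * pi * 2 * (8 * (L\<^sup>2 + L ^ 3 / d))"
    using c1 by (smt (verit) mult_left_mono pi_gt_zero)
  then have "pi * real (card F) \<le> pi * (294912 * (L\<^sup>2 + L ^ 3 / d))"
    by (simp add: field_simps)
  then have "real (card F) \<le> 294912 * (L\<^sup>2 + L ^ 3 / d)"
    using pi_gt_zero by (simp only: mult_le_cancel_left_pos)
  then show ?thesis unfolding d_def .
qed

definition CLset :: "zvec \<Rightarrow> real \<Rightarrow> real \<Rightarrow> real \<Rightarrow> zvec set" where
  "CLset a e s L = {p. norm (rv p) \<le> L \<and> \<bar>Jr (rv p) + e * Jr (rv p + rv a) - s\<bar> \<le> 1}"

lemma CLset_finite: "L \<ge> 0 \<Longrightarrow> finite (CLset a e s L)"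
  by (rule finite_subset[OF _ ball_count(1)[of L]]) (auto simp: CLset_def)

lemma norm_rv_ge1: "a \<noteq> 0 \<Longrightarrow> 1 \<le> norm (rv a)"
  using int_sep[of a 0] by simp

lemma count_lat:
  assumes e: "e = 1 \<or> e = -1" and L: "L \<ge> 1"
  shows "real (card (CLset a e s L)) \<le> 294912 * (L\<^sup>2 + L ^ 3 / max 1 (norm (rv a)))"
proof (cases "a = 0")
  case True
  have "card (CLset a e s L) \<le> card {x. norm (rv x) \<le> L}"
    by (rule card_mono[OF ball_count(1)]) (use L in \<open>auto simp: CLset_def\<close>)
  then have "real (card (CLset a e s L)) \<le> (2 * L + 1) ^ 3"
    using ball_count(2)[of L] L by linarith
  also have "\<dots> \<le> (3 * L) ^ 3" using L by (intro power_mono) auto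
  also have "\<dots> = 27 * L ^ 3" by (simp add: power_mult_distrib)
  also have "\<dots> \<le> 294912 * (L\<^sup>2 + L ^ 3 / max 1 (norm (rv a)))"
    using True L by simp
  finally show ?thesis .
next
  case False
  have m: "max 1 (norm (rv a)) = norm (rv a)" using norm_rv_ge1[OF False] by simp
  show ?thesis unfolding m
    by (rule count_shell) (use False e L CLset_finite[of L a e s] in \<open>auto simp: CLset_def\<close>)
qed

lemma pow2_cover:
  fixes f :: real
  assumes "1 \<le> f" "f \<le> 2 ^ K"
  shows "\<exists>k\<le>K. f \<le> 2 ^ k \<and> 2 ^ k \<le> 2 * f"
  using assms
proof (induction K)
  case 0
  then show ?case by auto
next
  case (Suc K)
  show ?case
  proof (cases "f \<le> 2 ^ K")
    case True
    then obtain k where "k \<le> K" "f \<le> 2 ^ k" "2 ^ k \<le> 2 * f" using Suc by auto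
    then show ?thesis by (intro exI[of _ k]) auto
  next
    case False
    then show ?thesis using Suc.prems by (intro exI[of _ "Suc K"]) auto
  qed
qed

lemma pow2_between:
  fixes A :: real
  assumes "A \<ge> 1"
  shows "\<exists>K. A \<le> 2 ^ K \<and> 2 ^ K \<le> 2 * A"
proof -
  obtain n where n: "A < 2 ^ n" using real_arch_pow[of 2 A] by auto
  then have "1 \<le> A" "A \<le> 2 ^ n" using assms by auto
  then obtain k where "k \<le> n" "A \<le> 2 ^ k" "2 ^ k \<le> 2 * A" using pow2_cover by blast
  then show ?thesis by auto
qed

lemma sum_If_card:
  assumes "finite F"
  shows "(\<Sum>x\<in>F. if P x then c else 0) = c * real (card {x\<in>F. P x})"
proof -
  have "(\<Sum>x\<in>F. if P x then c else 0) = (\<Sum>x\<in>{x\<in>F. P x}. c)"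
    using sum.inter_filter[OF assms, of "\<lambda>_. c" P] by simp
  then show ?thesis by simp
qed

lemma dyadic_bound:
  fixes f :: "'a \<Rightarrow> real" and F :: "'a set" and \<rho> :: real
  assumes fin: "finite F" and rho: "\<rho> > 0" and fx: "\<And>x. x \<in> F \<Longrightarrow> 1 \<le> f x \<and> f x \<le> 2 ^ K"
  shows "(\<Sum>x\<in>F. f x powr (-\<rho>)) \<le> 2 powr \<rho> * (\<Sum>k\<le>K. (2 ^ k) powr (-\<rho>) * real (card {x\<in>F. f x \<le> 2 ^ k}))"
proof -
  have pt: "f x powr (-\<rho>) \<le> 2 powr \<rho> * (\<Sum>k\<le>K. if f x \<le> 2 ^ k then (2 ^ k) powr (-\<rho>) else 0)"
    if x: "x \<in> F" for x
  proof -
    obtain k where k: "k \<le> K" "f x \<le> 2 ^ k" "2 ^ k \<le> 2 * f x" using pow2_cover fx[OF x] by blast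
    have fpos: "f x > 0" using fx[OF x] by linarith
    have h1: "(2::real) ^ k / 2 \<le> f x" using k(3) by simp
    have h2: "(0::real) < 2 ^ k / 2" by simp
    have "f x powr (-\<rho>) \<le> (2 ^ k / 2) powr (-\<rho>)"
      by (rule powr_mono2'[OF _ h2 h1]) (use rho in simp)
    also have "\<dots> = (2 ^ k) powr (-\<rho>) / 2 powr (-\<rho>)"
      by (rule powr_divide)
    also have "\<dots> = 2 powr \<rho> * (2 ^ k) powr (-\<rho>)"
      by (simp add: powr_minus field_simps)
    also have "(2 ^ k) powr (-\<rho>) \<le> (\<Sum>k\<le>K. if f x \<le> 2 ^ k then ((2::real) ^ k) powr (-\<rho>) else 0)"
    proof -
      have "(2 ^ k) powr (-\<rho>) = (if f x \<le> 2 ^ k then ((2::real) ^ k) powr (-\<rho>) else 0)" using k by simp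
      also have "\<dots> \<le> (\<Sum>k\<le>K. if f x \<le> 2 ^ k then ((2::real) ^ k) powr (-\<rho>) else 0)"
        by (rule member_le_sum) (use k in auto)
      finally show ?thesis .
    qed
    then have "2 powr \<rho> * (2 ^ k) powr (-\<rho>) \<le> 2 powr \<rho> * (\<Sum>k\<le>K. if f x \<le> 2 ^ k then ((2::real) ^ k) powr (-\<rho>) else 0)"
      by (intro mult_left_mono) auto
    finally show ?thesis .
  qed
  have "(\<Sum>x\<in>F. f x powr (-\<rho>)) \<le> (\<Sum>x\<in>F. 2 powr \<rho> * (\<Sum>k\<le>K. if f x \<le> 2 ^ k then (2 ^ k) powr (-\<rho>) else 0))"
    by (rule sum_mono) (rule pt)
  also have "\<dots> = 2 powr \<rho> * (\<Sum>k\<le>K. \<Sum>x\<in>F. if f x \<le> 2 ^ k then (2 ^ k) powr (-\<rho>) else 0)"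
  proof -
    have "(\<Sum>x\<in>F. 2 powr \<rho> * (\<Sum>k\<le>K. if f x \<le> 2 ^ k then (2 ^ k) powr (-\<rho>) else 0))
        = 2 powr \<rho> * (\<Sum>x\<in>F. \<Sum>k\<le>K. if f x \<le> 2 ^ k then ((2::real) ^ k) powr (-\<rho>) else 0)"
      by (rule sum_distrib_left[symmetric])
    also have "(\<Sum>x\<in>F. \<Sum>k\<le>K. if f x \<le> 2 ^ k then ((2::real) ^ k) powr (-\<rho>) else 0)
        = (\<Sum>k\<le>K. \<Sum>x\<in>F. if f x \<le> 2 ^ k then ((2::real) ^ k) powr (-\<rho>) else 0)"
      by (rule sum.swap)
    finally show ?thesis .
  qed
  also have "\<dots> = 2 powr \<rho> * (\<Sum>k\<le>K. (2 ^ k) powr (-\<rho>) * real (card {x\<in>F. f x \<le> 2 ^ k}))"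
    by (intro arg_cong[where f = "\<lambda>z. 2 powr \<rho> * z"] sum.cong refl sum_If_card[OF fin])
  finally show ?thesis .
qed

lemma geom_le:
  fixes q :: real
  assumes "q \<ge> 2"
  shows "(\<Sum>k\<le>K. q ^ k) \<le> 2 * q ^ K"
proof (induction K)
  case 0 then show ?case by simp
next
  case (Suc K)
  have "(\<Sum>k\<le>Suc K. q ^ k) = (\<Sum>k\<le>K. q ^ k) + q ^ Suc K" by simp
  also have "\<dots> \<le> 2 * q ^ K + q ^ Suc K" using Suc by simp
  also have "2 * q ^ K \<le> q ^ Suc K" using assms by (simp add: mult_right_mono)
  finally show ?case by simp
qed

definition Fs :: "zvec \<Rightarrow> real \<Rightarrow> real \<Rightarrow> real \<Rightarrow> zvec set" where
  "Fs a e s R = {x. norm (rv x) \<le> R \<and> \<bar>Jr (rv x + rv a) + e * Jr (rv x) - s\<bar> \<le> 1}"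

lemma Fs_eq:
  assumes e: "e = 1 \<or> e = -1"
  shows "Fs a e s R = CLset a e (e * s) R"
proof -
  have "\<bar>Jr (rv x + rv a) + e * Jr (rv x) - s\<bar> = \<bar>Jr (rv x) + e * Jr (rv x + rv a) - e * s\<bar>" for x
    using e by (auto simp: abs_minus_commute algebra_simps)
  then show ?thesis unfolding Fs_def CLset_def by (auto simp: add.commute)
qed

lemma powr_m1: "x > 0 \<Longrightarrow> x powr (-1) = 1 / (x :: real)"
  by (simp add: powr_minus divide_inverse)

lemma WL_far:
  assumes e: "e = 1 \<or> e = -1" and R: "R \<ge> 1" and A: "norm (rv a) > 2 * R"
  shows "(\<Sum>x\<in>Fs a e s R. 1 / Jr (rv x + rv a)) \<le> 884736 * R\<^sup>2 / max 1 (norm (rv a))"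
proof -
  define A where "A = norm (rv a)"
  have A1: "A > 2 * R" "A \<ge> 1" "max 1 A = A" using A R unfolding A_def by auto
  have fin: "finite (Fs a e s R)" unfolding Fs_eq[OF e] using CLset_finite R by simp
  have trm: "1 / Jr (rv x + rv a) \<le> 2 / A" if x: "x \<in> Fs a e s R" for x
  proof -
    have nx: "norm (rv x) \<le> R" using x unfolding Fs_def by auto
    have "A \<le> norm (rv x + rv a) + norm (rv x)"
      unfolding A_def by (metis add_diff_cancel_left' norm_triangle_ineq4 add.commute)
    then have "A / 2 \<le> Jr (rv x + rv a)" using nx A1 Jr_ge_norm[of "rv x + rv a"] by linarith
    moreover have "A / 2 > 0" using A1 by simp
    ultimately have "1 / Jr (rv x + rv a) \<le> 1 / (A / 2)" by (intro divide_left_mono) auto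
    then show ?thesis by simp
  qed
  have "(\<Sum>x\<in>Fs a e s R. 1 / Jr (rv x + rv a)) \<le> (\<Sum>x\<in>Fs a e s R. 2 / A)"
    by (rule sum_mono) (rule trm)
  also have "\<dots> = real (card (Fs a e s R)) * (2 / A)" by simp
  also have "\<dots> \<le> (294912 * (R\<^sup>2 + R ^ 3 / A)) * (2 / A)"
  proof (rule mult_right_mono)
    show "real (card (Fs a e s R)) \<le> 294912 * (R\<^sup>2 + R ^ 3 / A)"
      using count_lat[OF e R, of a "e * s"] A1 unfolding Fs_eq[OF e] A_def by simp
  qed (use A1 in simp)
  also have "\<dots> \<le> (294912 * (3 / 2 * R\<^sup>2)) * (2 / A)"
  proof -
    have "R ^ 3 / A \<le> R ^ 3 / (2 * R)" using A1 R by (intro divide_left_mono) auto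
    also have "\<dots> = R\<^sup>2 / 2" using R by (simp add: power2_eq_square power3_eq_cube)
    finally have "R\<^sup>2 + R ^ 3 / A \<le> 3 / 2 * R\<^sup>2" by simp
    then show ?thesis using A1 by (intro mult_right_mono) auto
  qed
  also have "\<dots> = 884736 * R\<^sup>2 / max 1 (norm (rv a))" using A1 unfolding A_def by simp
  finally show ?thesis .
qed

lemma card_shift:
  assumes e: "e = 1 \<or> e = -1" and k: "(2::real) ^ k \<ge> 1"
  shows "card {x\<in>Fs a e s R. Jr (rv x + rv a) \<le> 2 ^ k} \<le> card (CLset (- a) e s (2 ^ k))"
proof (rule card_inj_on_le[where f = "\<lambda>x. x + a"])
  show "inj_on (\<lambda>x. x + a) {x\<in>Fs a e s R. Jr (rv x + rv a) \<le> 2 ^ k}" by (auto intro: inj_onI)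
  show "finite (CLset (- a) e s (2 ^ k))" by (rule CLset_finite) (use k in simp)
  show "(\<lambda>x. x + a) ` {x\<in>Fs a e s R. Jr (rv x + rv a) \<le> 2 ^ k} \<subseteq> CLset (- a) e s (2 ^ k)"
  proof
    fix p assume "p \<in> (\<lambda>x. x + a) ` {x\<in>Fs a e s R. Jr (rv x + rv a) \<le> 2 ^ k}"
    then obtain x where x: "x \<in> Fs a e s R" "Jr (rv x + rv a) \<le> 2 ^ k" and p: "p = x + a" by auto
    have "norm (rv p) \<le> 2 ^ k" using x(2) Jr_ge_norm[of "rv x + rv a"] p by simp
    moreover have "rv p + rv (- a) = rv x" using p by simp
    ultimately show "p \<in> CLset (- a) e s (2 ^ k)" using x(1) p unfolding Fs_def CLset_def by auto
  qed
qed

lemma WL_near: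
  assumes e: "e = 1 \<or> e = -1" and R: "R \<ge> 1" and A: "norm (rv a) \<le> 2 * R"
  shows "(\<Sum>x\<in>Fs a e s R. 1 / Jr (rv x + rv a)) \<le> 94371840 * R\<^sup>2 / max 1 (norm (rv a))"
proof -
  define m where "m = max 1 (norm (rv a))"
  have m: "m \<ge> 1" "m \<le> 2 * R" "norm (rv (- a)) = norm (rv a)" using A R unfolding m_def by auto
  have fin: "finite (Fs a e s R)" unfolding Fs_eq[OF e] using CLset_finite R by simp
  obtain K where K: "4 * R \<le> 2 ^ K" "(2::real) ^ K \<le> 2 * (4 * R)" using pow2_between[of "4 * R"] R by auto
  have fx: "1 \<le> Jr (rv x + rv a) \<and> Jr (rv x + rv a) \<le> 2 ^ K" if x: "x \<in> Fs a e s R" for x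
  proof -
    have nx: "norm (rv x) \<le> R" using x unfolding Fs_def by auto
    have "Jr (rv x + rv a) \<le> 1 + norm (rv x + rv a)" by (rule Jr_le)
    also have "\<dots> \<le> 1 + (norm (rv x) + norm (rv a))" using norm_triangle_ineq by simp
    finally show ?thesis using nx A R K Jr_ge1 by auto
  qed
  have "(\<Sum>x\<in>Fs a e s R. 1 / Jr (rv x + rv a)) = (\<Sum>x\<in>Fs a e s R. Jr (rv x + rv a) powr (-1))"
    by (intro sum.cong refl) (simp only: powr_m1[OF Jr_pos])
  also have "\<dots> \<le> 2 powr 1 * (\<Sum>k\<le>K. (2 ^ k) powr (-1) * real (card {x\<in>Fs a e s R. Jr (rv x + rv a) \<le> 2 ^ k}))"
    by (rule dyadic_bound[OF fin]) (use fx in auto)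
  also have "\<dots> \<le> 2 * (\<Sum>k\<le>K. 294912 * (2 ^ k + (2 ^ k)\<^sup>2 / m))"
  proof -
    have "(2 ^ k) powr (-1) * real (card {x\<in>Fs a e s R. Jr (rv x + rv a) \<le> 2 ^ k})
        \<le> 294912 * (2 ^ k + (2 ^ k)\<^sup>2 / m)" for k
    proof -
      have k1: "(2::real) ^ k \<ge> 1" by simp
      have "real (card {x\<in>Fs a e s R. Jr (rv x + rv a) \<le> 2 ^ k}) \<le> real (card (CLset (- a) e s (2 ^ k)))"
        using card_shift[OF e k1] by simp
      also have "\<dots> \<le> 294912 * ((2 ^ k)\<^sup>2 + (2 ^ k) ^ 3 / m)"
        using count_lat[OF e k1, of "- a" s] m unfolding m_def by simp
      finally have c: "real (card {x\<in>Fs a e s R. Jr (rv x + rv a) \<le> 2 ^ k}) \<le> 294912 * ((2 ^ k)\<^sup>2 + (2 ^ k) ^ 3 / m)" .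
      have "(2 ^ k) powr (-1) * real (card {x\<in>Fs a e s R. Jr (rv x + rv a) \<le> 2 ^ k})
          \<le> (1 / 2 ^ k) * (294912 * ((2 ^ k)\<^sup>2 + (2 ^ k) ^ 3 / m))"
        using c by (simp add: powr_m1 divide_right_mono)
      also have "\<dots> = 294912 * (2 ^ k + (2 ^ k)\<^sup>2 / m)"
        by (simp add: power2_eq_square power3_eq_cube field_simps)
      finally show ?thesis .
    qed
    then show ?thesis by (simp add: sum_mono)
  qed
  also have "\<dots> = 589824 * ((\<Sum>k\<le>K. (2::real) ^ k) + (\<Sum>k\<le>K. (4::real) ^ k) / m)"
  proof -
    have p4: "((2::real) ^ k)\<^sup>2 = 4 ^ k" for k
      by (simp add: power_mult_distrib[symmetric] power2_eq_square)
    have "(\<Sum>k\<le>K. 294912 * ((2::real) ^ k + (2 ^ k)\<^sup>2 / m)) = (\<Sum>k\<le>K. 294912 * 2 ^ k + 294912 * (4 ^ k / m))"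
      by (intro sum.cong refl) (simp add: p4 distrib_left)
    also have "\<dots> = 294912 * (\<Sum>k\<le>K. (2::real) ^ k) + 294912 * ((\<Sum>k\<le>K. (4::real) ^ k) / m)"
      by (simp add: sum.distrib sum_distrib_left sum_divide_distrib)
    finally show ?thesis by simp
  qed
  also have "\<dots> \<le> 589824 * (2 * 2 ^ K + 2 * 4 ^ K / m)"
    using geom_le[of 2 K] geom_le[of 4 K] m by (intro mult_left_mono add_mono divide_right_mono) auto
  also have "\<dots> \<le> 589824 * (32 * R\<^sup>2 / m + 128 * R\<^sup>2 / m)"
  proof -
    have "2 * 2 ^ K \<le> 16 * R" using K by simp
    also have "16 * R \<le> 32 * R\<^sup>2 / m" using m R by (simp add: field_simps power2_eq_square)
    finally have a: "2 * 2 ^ K \<le> 32 * R\<^sup>2 / m" .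
    have "(4::real) ^ K = (2 ^ K)\<^sup>2" by (simp add: power_mult_distrib[symmetric] power2_eq_square)
    also have "\<dots> \<le> (8 * R)\<^sup>2" using K by (intro power_mono) auto
    finally have "2 * 4 ^ K / m \<le> 2 * (8 * R)\<^sup>2 / m" using m by (intro divide_right_mono) auto
    also have "\<dots> = 128 * R\<^sup>2 / m" by (simp add: power2_eq_square)
    finally show ?thesis using a by (intro mult_left_mono add_mono) auto
  qed
  also have "\<dots> = 94371840 * R\<^sup>2 / max 1 (norm (rv a))" unfolding m_def by (simp add: field_simps)
  finally show ?thesis .
qed

lemma WL:
  assumes e: "e = 1 \<or> e = -1" and R: "R \<ge> 1"
  shows "(\<Sum>x\<in>Fs a e s R. 1 / Jr (rv x + rv a)) \<le> 94371840 * R\<^sup>2 / max 1 (norm (rv a))"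
proof (cases "norm (rv a) \<le> 2 * R")
  case True then show ?thesis using WL_near[OF e R] by blast
next
  case False
  then have "(\<Sum>x\<in>Fs a e s R. 1 / Jr (rv x + rv a)) \<le> 884736 * R\<^sup>2 / max 1 (norm (rv a))"
    using WL_far[OF e R] by simp
  also have "\<dots> \<le> 94371840 * R\<^sup>2 / max 1 (norm (rv a))" by (intro divide_right_mono) auto
  finally show ?thesis .
qed

lemma pow2_powr: "((2::real) ^ k) powr a = (2 powr a) ^ k"
proof -
  have "((2::real) ^ k) powr a = (2 powr real k) powr a" by (simp add: powr_realpow)
  also have "\<dots> = 2 powr (real k * a)" by (simp add: powr_powr)
  also have "\<dots> = (2 powr a) ^ k" by (simp add: powr_power mult.commute)
  finally show ?thesis .
qed

lemma ball_card_le: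
  assumes "L \<ge> 1"
  shows "real (card {x. norm (rv x) \<le> L}) \<le> 27 * L ^ 3"
proof -
  have "real (card {x. norm (rv x) \<le> L}) \<le> (2 * L + 1) ^ 3" using ball_count(2)[of L] assms by simp
  also have "\<dots> \<le> (3 * L) ^ 3" using assms by (intro power_mono) auto
  also have "\<dots> = 27 * L ^ 3" by (simp add: power_mult_distrib)
  finally show ?thesis .
qed

lemma SB:
  fixes \<rho> r :: real and b :: zvec
  assumes rho: "1 \<le> \<rho>" "\<rho> \<le> 2" and r: "r \<ge> 1"
  shows "(\<Sum>x\<in>{x. norm (rv x) \<le> r}. Jr (rv x + rv b) powr (-\<rho>)) \<le> 900 * r powr (3 - \<rho>)"
proof -
  define F where "F = {x. norm (rv x) \<le> r}"
  have finF: "finite F" unfolding F_def using ball_count(1)[of r] r by simp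
  have cF: "real (card F) \<le> 27 * r ^ 3" unfolding F_def using ball_card_le[OF r] .
  obtain K where K: "r \<le> 2 ^ K" "(2::real) ^ K \<le> 2 * r" using pow2_between[OF r] by auto
  define f where "f x = Jr (rv x + rv b)" for x
  define F1 where "F1 = {x\<in>F. f x \<le> 2 ^ K}"
  define F2 where "F2 = {x\<in>F. \<not> f x \<le> 2 ^ K}"
  have F12: "F = F1 \<union> F2" "F1 \<inter> F2 = {}" "finite F1" "finite F2"
    unfolding F1_def F2_def using finF by auto
  have split: "(\<Sum>x\<in>F. f x powr (-\<rho>)) = (\<Sum>x\<in>F1. f x powr (-\<rho>)) + (\<Sum>x\<in>F2. f x powr (-\<rho>))"
    unfolding F12(1) by (rule sum.union_disjoint[OF F12(3,4,2)])
  have rpos: "r > 0" using r by simp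
  have B2: "(\<Sum>x\<in>F2. f x powr (-\<rho>)) \<le> 27 * r powr (3 - \<rho>)"
  proof -
    have "(\<Sum>x\<in>F2. f x powr (-\<rho>)) \<le> (\<Sum>x\<in>F2. r powr (-\<rho>))"
    proof (rule sum_mono)
      fix x assume "x \<in> F2"
      then have "r \<le> f x" unfolding F2_def using K by auto
      then show "f x powr (-\<rho>) \<le> r powr (-\<rho>)" using rpos rho by (intro powr_mono2') auto
    qed
    also have "\<dots> = real (card F2) * r powr (-\<rho>)" by simp
    also have "\<dots> \<le> real (card F) * r powr (-\<rho>)"
      using card_mono[OF finF, of F2] F12 by (intro mult_right_mono) auto
    also have "\<dots> \<le> (27 * r ^ 3) * r powr (-\<rho>)" using cF by (intro mult_right_mono) auto
    also have "\<dots> = 27 * r powr (3 - \<rho>)"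
      using rpos by (simp add: powr_diff powr_minus divide_inverse)
    finally show ?thesis .
  qed
  have fx1: "1 \<le> f x \<and> f x \<le> 2 ^ K" if "x \<in> F1" for x
    using that Jr_ge1 unfolding F1_def f_def by auto
  have B1: "(\<Sum>x\<in>F1. f x powr (-\<rho>)) \<le> 432 * r powr (3 - \<rho>)"
  proof -
    define q where "q = (2::real) powr (3 - \<rho>)"
    have q2: "q \<ge> 2" unfolding q_def using powr_mono[of 1 "3 - \<rho>" 2] rho by simp
    have tk: "(2 ^ k) powr (-\<rho>) * real (card {x\<in>F1. f x \<le> 2 ^ k}) \<le> 27 * q ^ k" for k
    proof -
      have k1: "(2::real) ^ k \<ge> 1" by simp
      have "card {x\<in>F1. f x \<le> 2 ^ k} \<le> card {p. norm (rv p) \<le> 2 ^ k}"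
      proof (rule card_inj_on_le[where f = "\<lambda>x. x + b"])
        show "inj_on (\<lambda>x. x + b) {x\<in>F1. f x \<le> 2 ^ k}" by (auto intro: inj_onI)
        show "finite {p. norm (rv p) \<le> 2 ^ k}" by (rule ball_count(1)) simp
        show "(\<lambda>x. x + b) ` {x\<in>F1. f x \<le> 2 ^ k} \<subseteq> {p. norm (rv p) \<le> 2 ^ k}"
        proof
          fix p assume "p \<in> (\<lambda>x. x + b) ` {x\<in>F1. f x \<le> 2 ^ k}"
          then obtain x where x: "f x \<le> 2 ^ k" and p: "p = x + b" by auto
          have "norm (rv p) = norm (rv x + rv b)" using p by simp
          also have "\<dots> \<le> f x" unfolding f_def by (rule Jr_ge_norm)
          finally show "p \<in> {p. norm (rv p) \<le> 2 ^ k}" using x by simp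
        qed
      qed
      then have "real (card {x\<in>F1. f x \<le> 2 ^ k}) \<le> 27 * (2 ^ k) ^ 3"
        using ball_card_le[OF k1] by linarith
      then have "(2 ^ k) powr (-\<rho>) * real (card {x\<in>F1. f x \<le> 2 ^ k}) \<le> (2 ^ k) powr (-\<rho>) * (27 * (2 ^ k) ^ 3)"
        by (intro mult_left_mono) auto
      also have "\<dots> = 27 * q ^ k"
      proof -
        have "q ^ k = ((2::real) ^ k) powr (3 - \<rho>)" unfolding q_def by (simp only: pow2_powr)
        also have "\<dots> = ((2::real) ^ k) powr 3 / ((2::real) ^ k) powr \<rho>" by (rule powr_diff)
        also have "\<dots> = ((2::real) ^ k) ^ 3 / ((2::real) ^ k) powr \<rho>" by (simp only: powr_numeral zero_le_power zero_le_numeral)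
        finally have "q ^ k = ((2::real) ^ k) ^ 3 / ((2::real) ^ k) powr \<rho>" .
        then show ?thesis by (simp only: powr_minus divide_inverse mult_ac)
      qed
      finally show ?thesis .
    qed
    have "(\<Sum>x\<in>F1. f x powr (-\<rho>)) \<le> 2 powr \<rho> * (\<Sum>k\<le>K. (2 ^ k) powr (-\<rho>) * real (card {x\<in>F1. f x \<le> 2 ^ k}))"
      by (rule dyadic_bound[OF F12(3)]) (use rho fx1 in auto)
    also have "\<dots> \<le> 2 powr \<rho> * (\<Sum>k\<le>K. 27 * q ^ k)"
      by (intro mult_left_mono sum_mono tk) auto
    also have "\<dots> = 2 powr \<rho> * (27 * (\<Sum>k\<le>K. q ^ k))" by (simp add: sum_distrib_left)
    also have "\<dots> \<le> 2 powr \<rho> * (27 * (2 * q ^ K))"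
      using geom_le[OF q2, of K] by (intro mult_left_mono) auto
    also have "q ^ K = (2 ^ K) powr (3 - \<rho>)" unfolding q_def by (simp add: pow2_powr)
    also have "\<dots> \<le> (2 * r) powr (3 - \<rho>)" using K rho by (intro powr_mono2) auto
    also have "\<dots> = 2 powr (3 - \<rho>) * r powr (3 - \<rho>)" using rpos by (simp add: powr_mult)
    finally have "(\<Sum>x\<in>F1. f x powr (-\<rho>)) \<le> 54 * (2 powr \<rho> * 2 powr (3 - \<rho>)) * r powr (3 - \<rho>)"
      by (simp add: mult_ac)
    also have "2 powr \<rho> * 2 powr (3 - \<rho>) = (8::real)" by (simp add: powr_add[symmetric])
    finally show ?thesis by simp
  qed
  have "(\<Sum>x\<in>F. f x powr (-\<rho>)) \<le> 900 * r powr (3 - \<rho>)"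
    using split B1 B2 powr_ge_zero[of r "3 - \<rho>"] by linarith
  then show ?thesis unfolding F_def f_def .
qed

lemma dyadic_ge1: "dyadic N \<Longrightarrow> N \<ge> 1"
  unfolding dyadic_def by auto

lemma sim_upper:
  assumes "c \<ge> 1" "N \<ge> 1" "sim c x N"
  shows "norm (rv x) \<le> c * N"
  using assms unfolding sim_def znorm_rv by (auto split: if_splits)

lemma sim_lower:
  assumes "c \<ge> 1" "N \<ge> 1" "sim c x N"
  shows "N \<le> c * Jr (rv x)"
proof (cases "N = 1")
  case True
  then show ?thesis using assms(1) Jr_ge1[of "rv x"] by (metis mult_mono mult_1 zero_le_one order_trans linorder_le_cases mult.commute)
next
  case False
  then have "N / c \<le> norm (rv x)" using assms unfolding sim_def znorm_rv by auto
  then have "N \<le> c * norm (rv x)" using assms(1) by (simp add: field_simps)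
  also have "\<dots> \<le> c * Jr (rv x)" using assms(1) Jr_ge_norm by (intro mult_left_mono) auto
  finally show ?thesis .
qed

lemma inv_sq_bound:
  assumes "c \<ge> 1" "N \<ge> 1" "sim c x N"
  shows "Jr (rv x) powr (-2) \<le> c\<^sup>2 / N\<^sup>2"
proof -
  have J: "Jr (rv x) > 0" by (rule Jr_pos)
  have "N \<le> c * Jr (rv x)" by (rule sim_lower[OF assms])
  then have "N\<^sup>2 \<le> (c * Jr (rv x))\<^sup>2" using assms by (intro power_mono) auto
  then have "N\<^sup>2 \<le> c\<^sup>2 * (Jr (rv x))\<^sup>2" by (simp add: power_mult_distrib)
  moreover have "Jr (rv x) powr (-2) = 1 / (Jr (rv x))\<^sup>2" using J by (simp add: powr_minus divide_inverse)
  moreover have "1 / (Jr (rv x))\<^sup>2 \<le> c\<^sup>2 / N\<^sup>2" if "N\<^sup>2 \<le> c\<^sup>2 * (Jr (rv x))\<^sup>2"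
  proof -
    have "(Jr (rv x))\<^sup>2 > 0" "N\<^sup>2 > 0" using J assms(2) by auto
    then show ?thesis using that by (simp add: divide_simps mult.commute)
  qed
  ultimately show ?thesis by simp
qed

lemma Jr_max: "Jr p \<le> sqrt 2 * max 1 (norm p)"
proof -
  have "1 + (norm p)\<^sup>2 \<le> 2 * (max 1 (norm p))\<^sup>2"
  proof (cases "norm p \<le> 1")
    case True
    have "norm p * norm p \<le> 1" using True by (intro mult_le_one) auto
    then show ?thesis using True by (simp add: max_def power2_eq_square)
  next
    case False
    have "1 * 1 \<le> norm p * norm p" using False by (intro mult_mono) auto
    then show ?thesis using False by (simp add: max_def power2_eq_square)
  qed
  then have "Jr p \<le> sqrt (2 * (max 1 (norm p))\<^sup>2)" unfolding Jr_def by (rule real_sqrt_le_mono)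
  also have "\<dots> = sqrt 2 * max 1 (norm p)" by (simp add: real_sqrt_mult)
  finally show ?thesis .
qed

lemma weight12:
  fixes \<beta> :: real
  shows "Jr p powr (-2 * \<beta>) * (1 / max 1 (norm p)) \<le> sqrt 2 * Jr p powr (-(1 + 2 * \<beta>))"
proof -
  have J: "Jr p > 0" by (rule Jr_pos)
  have m: "max 1 (norm p) > 0" by simp
  have "1 / max 1 (norm p) \<le> sqrt 2 / Jr p"
    using Jr_max[of p] J m by (simp add: field_simps)
  then have "Jr p powr (-2 * \<beta>) * (1 / max 1 (norm p)) \<le> Jr p powr (-2 * \<beta>) * (sqrt 2 / Jr p)"
    by (intro mult_left_mono) auto
  also have "\<dots> = sqrt 2 * (Jr p powr (-2 * \<beta>) * (1 / Jr p))" by simp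
  also have "Jr p powr (-2 * \<beta>) * (1 / Jr p) = Jr p powr (-(1 + 2 * \<beta>))"
  proof -
    have e: "-(1 + 2 * \<beta>) = -2 * \<beta> + -1" by simp
    show ?thesis by (simp only: e powr_add powr_m1[OF J])
  qed
  finally show ?thesis .
qed

lemma term_bound:
  fixes \<beta> \<delta> c N1 N2 N3 M :: real and n1 n2 n3 :: zvec
  assumes c: "c \<ge> 1" and N: "N1 \<ge> 1" "N2 \<ge> 1" "N3 \<ge> 1" and M: "N1 \<le> M" "N2 \<le> M" "N3 \<le> M"
    and d: "\<delta> > 0"
    and s1: "sim c n1 N1" and s2: "sim c n2 N2" and s3: "sim c n3 N3"
  shows "jbr (vadd (vadd n1 n2) n3) powr (2 * ((1/2 + \<delta>) - 1)) * jbr (vadd n1 n2) powr (-2 * \<beta>)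
       * jbr n1 powr (-2) * jbr n3 powr (-2)
     \<le> ((4 * c * M) powr (2 * \<delta>) * (c\<^sup>2 / N1\<^sup>2) * (c\<^sup>2 / N3\<^sup>2)) *
       (Jr (rv n1 + rv n2) powr (-2 * \<beta>) * (1 / Jr (rv n3 + rv (n1 + n2))))"
proof -
  define J where "J = Jr (rv n3 + rv (n1 + n2))"
  have jJ: "jbr (vadd (vadd n1 n2) n3) = J" unfolding J_def jbr_rv vadd_eq by (simp add: add_ac)
  have j12: "jbr (vadd n1 n2) = Jr (rv n1 + rv n2)" unfolding jbr_rv vadd_eq by simp
  have Jp: "J > 0" unfolding J_def by (rule Jr_pos)
  have u1: "norm (rv n1) \<le> c * N1" "norm (rv n2) \<le> c * N2" "norm (rv n3) \<le> c * N3"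
    using sim_upper[OF c N(1) s1] sim_upper[OF c N(2) s2] sim_upper[OF c N(3) s3] by auto
  have "J \<le> 1 + norm (rv n3 + rv (n1 + n2))" unfolding J_def by (rule Jr_le)
  also have "\<dots> \<le> 1 + (norm (rv n3) + (norm (rv n1) + norm (rv n2)))"
    using norm_triangle_ineq[of "rv n3" "rv (n1 + n2)"] norm_triangle_ineq[of "rv n1" "rv n2"] by simp
  also have "\<dots> \<le> 1 + (c * M + (c * M + c * M))"
  proof -
    have "c * N1 \<le> c * M" "c * N2 \<le> c * M" "c * N3 \<le> c * M" using M c by (auto intro: mult_left_mono)
    then show ?thesis using u1 by linarith
  qed
  also have "\<dots> \<le> 4 * c * M"
  proof -
    have "1 * 1 \<le> c * M" using c M N by (intro mult_mono) auto
    then show ?thesis by linarith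
  qed
  finally have J4: "J \<le> 4 * c * M" .
  have e: "2 * ((1/2 + \<delta>) - 1) = 2 * \<delta> + -1" by simp
  have A: "J powr (2 * ((1/2 + \<delta>) - 1)) \<le> (4 * c * M) powr (2 * \<delta>) * (1 / J)"
  proof -
    have "J powr (2 * ((1/2 + \<delta>) - 1)) = J powr (2 * \<delta>) * (1 / J)"
      by (simp only: e powr_add powr_m1[OF Jp])
    also have "\<dots> \<le> (4 * c * M) powr (2 * \<delta>) * (1 / J)"
      using J4 Jp d by (intro mult_right_mono powr_mono2) auto
    finally show ?thesis .
  qed
  have B1: "jbr n1 powr (-2) \<le> c\<^sup>2 / N1\<^sup>2" unfolding jbr_rv by (rule inv_sq_bound[OF c N(1) s1])
  have B3: "jbr n3 powr (-2) \<le> c\<^sup>2 / N3\<^sup>2" unfolding jbr_rv by (rule inv_sq_bound[OF c N(3) s3])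
  define P where "P = Jr (rv n1 + rv n2) powr (-2 * \<beta>)"
  have P0: "P \<ge> 0" unfolding P_def by simp
  have "J powr (2 * ((1/2 + \<delta>) - 1)) * P * jbr n1 powr (-2) * jbr n3 powr (-2)
      \<le> ((4 * c * M) powr (2 * \<delta>) * (1 / J)) * P * (c\<^sup>2 / N1\<^sup>2) * (c\<^sup>2 / N3\<^sup>2)"
    using A B1 B3 P0 Jp by (intro mult_mono) (auto intro!: mult_nonneg_nonneg)
  also have "\<dots> = ((4 * c * M) powr (2 * \<delta>) * (c\<^sup>2 / N1\<^sup>2) * (c\<^sup>2 / N3\<^sup>2)) * (P * (1 / J))"
    by (simp add: mult_ac)
  finally show ?thesis unfolding jJ j12 P_def J_def .
qed

lemma shell_member:
  assumes e123: "e123 \<in> {1, -1}" and ph: "\<bar>phase e123 e1 e2 e3 n1 n2 n3 - real_of_int m\<bar> \<le> 1"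
  shows "\<bar>Jr (rv n3 + rv (n1 + n2)) + (e123 * e3) * Jr (rv n3) - e123 * (real_of_int m - e1 * jbr n1 - e2 * jbr n2)\<bar> \<le> 1"
proof -
  define X where "X = Jr (rv n3 + rv (n1 + n2))"
  define Y where "Y = Jr (rv n3)"
  have pX: "phase e123 e1 e2 e3 n1 n2 n3 = e123 * X + e1 * jbr n1 + e2 * jbr n2 + e3 * Y"
    unfolding phase_def X_def Y_def jbr_rv vadd_eq by (simp add: add_ac)
  have sq: "e123 * e123 = 1" using e123 by auto
  have "X + (e123 * e3) * Y - e123 * (real_of_int m - e1 * jbr n1 - e2 * jbr n2)
      = e123 * (phase e123 e1 e2 e3 n1 n2 n3 - real_of_int m)"
  proof -
    have gen: "e * (e * x + a + b + f * y - mm) = (e * e) * x + e * f * y - e * (mm - a - b)"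
      for e x a b f y mm :: real by (simp add: algebra_simps)
    show ?thesis unfolding pX gen sq by simp
  qed
  then have "\<bar>X + (e123 * e3) * Y - e123 * (real_of_int m - e1 * jbr n1 - e2 * jbr n2)\<bar>
      = \<bar>phase e123 e1 e2 e3 n1 n2 n3 - real_of_int m\<bar>"
    using e123 by (auto simp: abs_mult)
  then show ?thesis using ph unfolding X_def Y_def by simp
qed

theorem lemma4p23:
  fixes \<beta> \<delta>\<^sub>2 \<gamma> c :: real
  assumes "0 < \<beta>" "\<beta> < 1/2" "0 < \<delta>\<^sub>2" "0 < \<gamma>" "\<gamma> < \<beta>" "1 \<le> c"
  shows "\<exists>C>0. \<forall>N123 N1 N2 N3 (m::int) e123 e1 e2 e3 (n2::zvec).
    dyadic N123 \<longrightarrow> dyadic N1 \<longrightarrow> dyadic N2 \<longrightarrow> dyadic N3 \<longrightarrow>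
    e123 \<in> {1, -1} \<longrightarrow> e1 \<in> {1, -1} \<longrightarrow> e2 \<in> {1, -1} \<longrightarrow> e3 \<in> {1, -1} \<longrightarrow>
    sim c n2 N2 \<longrightarrow>
    (\<Sum>(n1, n3) \<in> {(n1, n3). sim c n1 N1 \<and> sim c n3 N3 \<and>
         \<bar>phase e123 e1 e2 e3 n1 n2 n3 - real_of_int m\<bar> \<le> 1}.
       jbr (vadd (vadd n1 n2) n3) powr (2 * ((1/2 + \<delta>\<^sub>2) - 1))
       * jbr (vadd n1 n2) powr (-2 * \<beta>)
       * jbr n1 powr (-2) * jbr n3 powr (-2))
    \<le> C * (max N1 (max N2 N3)) powr (2 * \<delta>\<^sub>2) * N1 powr (-2 * \<gamma>) * N2 powr (2 * \<gamma>)"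
proof -
  have c: "c \<ge> 1" using assms by simp
  define \<rho> where "\<rho> = 1 + 2 * \<beta>"
  have rho: "1 \<le> \<rho>" "\<rho> \<le> 2" "3 - \<rho> = 2 - 2 * \<beta>" using assms unfolding \<rho>_def by auto
  define K where "K = (4 * c) powr (2 * \<delta>\<^sub>2) * c ^ 6 * 94371840 * sqrt 2 * 900 * c powr (2 - 2 * \<beta>)"
  have Kpos: "K > 0" using c unfolding K_def by simp
  show ?thesis
  proof (rule exI[of _ K], intro conjI allI impI)
    show "K > 0" by (rule Kpos)
  next
    fix N123 N1 N2 N3 :: real and m :: int and e123 e1 e2 e3 :: real and n2 :: zvec
    assume H: "dyadic N123" "dyadic N1" "dyadic N2" "dyadic N3" "e123 \<in> {1, -1}" "e1 \<in> {1, -1}"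
      "e2 \<in> {1, -1}" "e3 \<in> {1, -1}" "sim c n2 N2"
    have N: "N1 \<ge> 1" "N2 \<ge> 1" "N3 \<ge> 1" using H dyadic_ge1 by auto
    define M where "M = max N1 (max N2 N3)"
    have M: "N1 \<le> M" "N2 \<le> M" "N3 \<le> M" "M \<ge> 1" using N unfolding M_def by auto
    define e where "e = e123 * e3"
    have e: "e = 1 \<or> e = -1" using H(5,8) unfolding e_def by auto
    define B1 where "B1 = {x. norm (rv x) \<le> c * N1}"
    define sf where "sf n1 = e123 * (real_of_int m - e1 * jbr n1 - e2 * jbr n2)" for n1
    define Sig where "Sig = Sigma B1 (\<lambda>n1. Fs (n1 + n2) e (sf n1) (c * N3))"
    define S where "S = {(n1, n3). sim c n1 N1 \<and> sim c n3 N3 \<and>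
         \<bar>phase e123 e1 e2 e3 n1 n2 n3 - real_of_int m\<bar> \<le> 1}"
    define T where "T = (\<lambda>(n1, n3). jbr (vadd (vadd n1 n2) n3) powr (2 * ((1/2 + \<delta>\<^sub>2) - 1))
       * jbr (vadd n1 n2) powr (-2 * \<beta>) * jbr n1 powr (-2) * jbr n3 powr (-2))"
    define Cst where "Cst = (4 * c * M) powr (2 * \<delta>\<^sub>2) * (c\<^sup>2 / N1\<^sup>2) * (c\<^sup>2 / N3\<^sup>2)"
    define g where "g = (\<lambda>(n1, n3). Jr (rv n1 + rv n2) powr (-2 * \<beta>) * (1 / Jr (rv n3 + rv (n1 + n2))))"
    have cN1: "c * N1 \<ge> 1" "c * N3 \<ge> 1" using c N by (metis mult_mono mult_1 zero_le_one order_trans)+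
    have finB1: "finite B1" unfolding B1_def using ball_count(1) cN1 by simp
    have finFs: "finite (Fs (n1 + n2) e (sf n1) (c * N3))" for n1
      unfolding Fs_eq[OF e] by (rule CLset_finite) (use cN1 in simp)
    have finSig: "finite Sig" unfolding Sig_def using finB1 finFs by auto
    have sub: "S \<subseteq> Sig"
    proof
      fix p assume "p \<in> S"
      then obtain n1 n3 where p: "p = (n1, n3)" and s1: "sim c n1 N1" and s3: "sim c n3 N3"
        and ph: "\<bar>phase e123 e1 e2 e3 n1 n2 n3 - real_of_int m\<bar> \<le> 1" unfolding S_def by auto
      have "n1 \<in> B1" unfolding B1_def using sim_upper[OF c N(1) s1] by simp
      moreover have "n3 \<in> Fs (n1 + n2) e (sf n1) (c * N3)"
        unfolding Fs_def e_def sf_def using sim_upper[OF c N(3) s3] shell_member[OF H(5) ph] by simp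
      ultimately show "p \<in> Sig" unfolding Sig_def p by simp
    qed
    have pt: "T p \<le> Cst * g p" if "p \<in> S" for p
    proof -
      obtain n1 n3 where p: "p = (n1, n3)" and s1: "sim c n1 N1" and s3: "sim c n3 N3"
        using \<open>p \<in> S\<close> unfolding S_def by auto
      show ?thesis unfolding p T_def g_def Cst_def
        using term_bound[OF c N M(1,2,3) assms(3) s1 H(9) s3] by simp
    qed
    have g0: "g p \<ge> 0" for p unfolding g_def by (auto simp: case_prod_beta intro!: divide_nonneg_pos Jr_pos)
    have Cst0: "Cst \<ge> 0" unfolding Cst_def by simp
    have "sum T S \<le> sum (\<lambda>p. Cst * g p) S" by (rule sum_mono) (rule pt)
    also have "\<dots> \<le> sum (\<lambda>p. Cst * g p) Sig"
      by (rule sum_mono2[OF finSig sub]) (use g0 Cst0 in simp)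
    also have "\<dots> = Cst * (\<Sum>n1\<in>B1. \<Sum>n3\<in>Fs (n1 + n2) e (sf n1) (c * N3). g (n1, n3))"
      unfolding Sig_def sum_distrib_left[symmetric] using finB1 finFs by (simp add: sum.Sigma)
    also have "\<dots> \<le> Cst * (\<Sum>n1\<in>B1. 94371840 * (c * N3)\<^sup>2 * sqrt 2 * Jr (rv n1 + rv n2) powr (-\<rho>))"
    proof (intro mult_left_mono sum_mono Cst0)
      fix n1 assume "n1 \<in> B1"
      have "(\<Sum>n3\<in>Fs (n1 + n2) e (sf n1) (c * N3). g (n1, n3))
          = Jr (rv n1 + rv n2) powr (-2 * \<beta>) * (\<Sum>n3\<in>Fs (n1 + n2) e (sf n1) (c * N3). 1 / Jr (rv n3 + rv (n1 + n2)))"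
        unfolding g_def by (simp add: sum_distrib_left)
      also have "\<dots> \<le> Jr (rv n1 + rv n2) powr (-2 * \<beta>) * (94371840 * (c * N3)\<^sup>2 / max 1 (norm (rv (n1 + n2))))"
        by (intro mult_left_mono WL[OF e cN1(2)]) simp
      also have "\<dots> = 94371840 * (c * N3)\<^sup>2 * (Jr (rv n1 + rv n2) powr (-2 * \<beta>) * (1 / max 1 (norm (rv n1 + rv n2))))"
        by simp
      also have "\<dots> \<le> 94371840 * (c * N3)\<^sup>2 * (sqrt 2 * Jr (rv n1 + rv n2) powr (-\<rho>))"
        unfolding \<rho>_def by (intro mult_left_mono weight12) simp
      finally show "(\<Sum>n3\<in>Fs (n1 + n2) e (sf n1) (c * N3). g (n1, n3))
          \<le> 94371840 * (c * N3)\<^sup>2 * sqrt 2 * Jr (rv n1 + rv n2) powr (-\<rho>)" by (simp add: mult_ac)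
    qed
    also have "\<dots> = Cst * ((94371840 * (c * N3)\<^sup>2 * sqrt 2) * (\<Sum>n1\<in>B1. Jr (rv n1 + rv n2) powr (-\<rho>)))"
      by (simp only: sum_distrib_left)
    also have "\<dots> = Cst * (94371840 * (c * N3)\<^sup>2 * sqrt 2) * (\<Sum>n1\<in>B1. Jr (rv n1 + rv n2) powr (-\<rho>))"
      by (simp only: mult.assoc)
    also have "\<dots> \<le> Cst * (94371840 * (c * N3)\<^sup>2 * sqrt 2) * (900 * (c * N1) powr (3 - \<rho>))"
      using SB[OF rho(1,2) cN1(1), of n2] Cst0 unfolding B1_def by (intro mult_left_mono) auto
    also have "\<dots> = K * M powr (2 * \<delta>\<^sub>2) * N1 powr (-2 * \<beta>)"
    proof -
      have e1: "(4 * c * M) powr (2 * \<delta>\<^sub>2) = (4 * c) powr (2 * \<delta>\<^sub>2) * M powr (2 * \<delta>\<^sub>2)"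
        using c M by (simp add: powr_mult)
      have e2: "(c * N1) powr (3 - \<rho>) = c powr (2 - 2 * \<beta>) * (N1\<^sup>2 * N1 powr (-2 * \<beta>))"
      proof -
        have "(c * N1) powr (3 - \<rho>) = c powr (2 - 2 * \<beta>) * N1 powr (2 - 2 * \<beta>)"
          unfolding rho(3) using c N by (simp add: powr_mult)
        moreover have "N1 powr (2 - 2 * \<beta>) = N1\<^sup>2 * N1 powr (-2 * \<beta>)"
        proof -
          have "N1 powr (2 - 2 * \<beta>) = N1 powr (2 + -2 * \<beta>)" by simp
          also have "\<dots> = N1 powr 2 * N1 powr (-2 * \<beta>)" by (rule powr_add)
          also have "N1 powr 2 = N1\<^sup>2" using N by simp
          finally show ?thesis .
        qed
        ultimately show ?thesis by simp
      qed
      have N10: "N1 \<noteq> 0" "N3 \<noteq> 0" using N by auto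
      have c6: "c ^ 6 = c * (c * (c * (c * (c * c))))" by (simp add: eval_nat_numeral)
      show ?thesis unfolding Cst_def e1 e2 K_def c6 using N10
        by (simp add: field_simps power2_eq_square)
    qed
    also have "\<dots> \<le> K * M powr (2 * \<delta>\<^sub>2) * N1 powr (-2 * \<gamma>) * N2 powr (2 * \<gamma>)"
    proof -
      have "N1 powr (-2 * \<beta>) \<le> N1 powr (-2 * \<gamma>)" using N assms by (intro powr_mono) auto
      also have "\<dots> \<le> N1 powr (-2 * \<gamma>) * N2 powr (2 * \<gamma>)"
      proof -
        have "1 \<le> N2 powr (2 * \<gamma>)" using N assms by (intro ge_one_powr_ge_zero) auto
        then show ?thesis by (simp add: mult_le_cancel_left1)
      qed
      finally have "N1 powr (-2 * \<beta>) \<le> N1 powr (-2 * \<gamma>) * N2 powr (2 * \<gamma>)" .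
      then have "K * M powr (2 * \<delta>\<^sub>2) * N1 powr (-2 * \<beta>) \<le> K * M powr (2 * \<delta>\<^sub>2) * (N1 powr (-2 * \<gamma>) * N2 powr (2 * \<gamma>))"
        using Kpos by (intro mult_left_mono) auto
      then show ?thesis by (simp add: mult.assoc)
    qed
    finally show "sum T S \<le> K * M powr (2 * \<delta>\<^sub>2) * N1 powr (-2 * \<gamma>) * N2 powr (2 * \<gamma>)" .
  qed
qed

end
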